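(* Consider an ergodic Jackson network process $\mathbf{X}$ (setting in the context) whose extended routing matrix $r$ is reversible (with respect to $\eta$), with stationary distribution $\xi(\mathbf{n})=\prod_{j=1}^{J}\prod_{k=1}^{n_j}\frac{\eta_j}{\mu_j(k)}C(j)^{-1}$. Let $\boldsymbol{\gamma}=(\gamma_j:j\in\overline{J})\in[0,\infty)^{\overline{J}}$, $\|\boldsymbol{\gamma}\|_\infty=\max_j\gamma_j$, and define $\alpha_0=1$, $\alpha_j=\gamma_j$ for $j\in\overline{J}$ if $\|\boldsymbol{\gamma}\|_\infty\le1$ and $\alpha_j=\gamma_j/\|\boldsymbol{\gamma}\|_\infty$ if $\|\boldsymbol{\gamma}\|_\infty>1$; define $\beta=1$ if $\|\boldsymbol{\gamma}\|_\infty\le1$ and $\beta=\|\boldsymbol{\gamma}\|_\infty$ otherwise. Let $r^{(\boldsymbol{\alpha})}$ be the randomized-reflection modification of $r$: $r^{(\boldsymbol{\alpha})}(i,j)=r(i,j)\alpha_j$ for $i\neq j$, $r^{(\boldsymbol{\alpha})}(i,i)=1-\sum_{j\ne i}r(i,j)\alpha_j$. Let $\mathbf{X}^{(\boldsymbol{\gamma})}$ be the continuous-time Markov chain on $\mathbb{N}_0^{\overline{J}}$ whose positive transition rates are $q(\mathbf{n},\mathbf{n}+\mathbf{e}_i)=\beta\lambda r^{(\boldsymbol{\alpha})}(0,i)$ for $i\in\overline{J}$, $q(\mathbf{n},\mathbf{n}-\mathbf{e}_j+\mathbf{e}_i)=1_{[n_j>0]}\gamma_j\mu_j(n_j)r^{(\boldsymbol{\alpha})}(j,i)$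 for $i,j\in\overline{J}$, $i\ne j$, and $q(\mathbf{n},\mathbf{n}-\mathbf{e}_j)=1_{[n_j>0]}\gamma_j\mu_j(n_j)r^{(\boldsymbol{\alpha})}(j,0)$ for $j\in\overline{J}$. Let $B(\boldsymbol{\gamma})=\{j\in\overline{J}:\gamma_j=0\}$ and $W(\boldsymbol{\gamma})=\overline{J}\setminus B(\boldsymbol{\gamma})$. Then $\xi$ is a stationary distribution of $\mathbf{X}^{(\boldsymbol{\gamma})}$. If $B(\boldsymbol{\gamma})=\emptyset$, then $\mathbf{X}^{(\boldsymbol{\gamma})}$ is ergodic. If $B(\boldsymbol{\gamma})\neq\emptyset$, then $\mathbf{X}^{(\boldsymbol{\gamma})}$ is not irreducible on $\mathbb{N}_0^{\overline{J}}$, its state space splits into the infinitely many closed subspaces $\mathbb{N}_0^{W(\boldsymbol{\gamma})}\times\{(n_j:j\in B(\boldsymbol{\gamma}))\}$, and for every probability distribution $\varphi$ on $\mathbb{N}_0^{B(\boldsymbol{\gamma})}$ the distribution \[ \xi^{(\boldsymbol{\gamma})}_\varphi(\mathbf{n})=\prod_{j\in W(\boldsymbol{\gamma})}\prod_{k=1}^{n_j}\frac{\eta_j}{\mu_j(k)}C(j)^{-1}\cdot\varphi(n_j:j\in B(\boldsymbol{\gamma})),\qquad \mathbf{n}\in\mathbb{N}_0^{\overline{J}}, \] is a stationary distribution of $\mathbf{X}^{(\boldsymbol{\gamma})}$.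
   Context: Jackson network setting: node set $\overline{J}=\{1,\dots,J\}$, extended node set $\overline{J}_0=\{0,1,\dots,J\}$ (0 = external source/sink). External Poisson arrivals at node $j$ with rates $\lambda_j\ge0$, $\lambda=\sum_j\lambda_j>0$; single servers with infinite waiting room, FCFS, service intensity $\mu_j(n_j)>0$ when $n_j>0$ customers are at node $j$. Extended routing matrix $r=(r(i,j):i,j\in\overline{J}_0)$ is stochastic and irreducible with $r(0,j)=\lambda_j/\lambda$, $r(0,0)=0$. $\eta=(\eta_j:j\in\overline{J}_0)$ is the extended traffic solution: $\eta_0=\lambda$ and $\eta_j=\sum_{i\in\overline{J}_0}\eta_i r(i,j)$ for all $j\in\overline{J}_0$; reversibility means $\eta_i r(i,j)=\eta_j r(j,i)$. The Jackson network process $\mathbf{X}$ is the Markov chain on $\mathbb{N}_0^{\overline{J}}$ with rates $q(\mathbf{n},\mathbf{n}+\mathbf{e}_i)=\lambda r(0,i)$, $q(\mathbf{n},\mathbf{n}-\mathbf{e}_j+\mathbf{e}_i)=1_{[n_j>0]}\mu_j(n_j)r(j,i)$ ($i\neq j$), $q(\mathbf{n},\mathbf{n}-\mathbf{e}_j)=1_{[n_j>0]}\mu_j(n_j)r(j,0)$; it is assumed ergodic, and $C(j)=\sum_{n\ge0}\prod_{k=1}^n\eta_j/\mu_j(k)<\infty$. $\mathbf{e}_j$ is the $j$-th unit vector. *)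

theory Defs
  imports "HOL-Analysis.Analysis"
begin

text \<open>A state of a network with node set I is a vector of queue lengths indexed by I,
  represented as a function nat \<Rightarrow> nat vanishing outside I.  Thus states I models N_0^I.\<close>

type_synonym state = "nat \<Rightarrow> nat"

definition states :: "nat set \<Rightarrow> state set" where
  "states I = {n. \<forall>k. k \<notin> I \<longrightarrow> n k = 0}"

text \<open>A chain on state space S is given by its off-diagonal transition rates q x y (x \<noteq> y).\<close>

definition qout :: "'a set \<Rightarrow> ('a \<Rightarrow> 'a \<Rightarrow> real) \<Rightarrow> 'a \<Rightarrow> real" where
  "qout S q x = infsum (\<lambda>y. q x y) (S - {x})"

definition prob_dist :: "'a set \<Rightarrow> ('a \<Rightarrow> real) \<Rightarrow> bool" where
  "prob_dist S p \<longleftrightarrow> (\<forall>x\<in>S. 0 \<le> p x) \<and> (p has_sum 1) S"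

definition stationary_dist :: "'a set \<Rightarrow> ('a \<Rightarrow> 'a \<Rightarrow> real) \<Rightarrow> ('a \<Rightarrow> real) \<Rightarrow> bool" where
  "stationary_dist S q p \<longleftrightarrow> prob_dist S p \<and>
     (\<forall>x\<in>S. ((\<lambda>y. p y * q y x) has_sum (p x * qout S q x)) (S - {x}))"

definition trans_rel :: "'a set \<Rightarrow> ('a \<Rightarrow> 'a \<Rightarrow> real) \<Rightarrow> ('a \<times> 'a) set" where
  "trans_rel S q = {(x, y). x \<in> S \<and> y \<in> S \<and> x \<noteq> y \<and> 0 < q x y}"

definition irreducible_chain :: "'a set \<Rightarrow> ('a \<Rightarrow> 'a \<Rightarrow> real) \<Rightarrow> bool" where
  "irreducible_chain S q \<longleftrightarrow> (\<forall>x\<in>S. \<forall>y\<in>S. (x, y) \<in> (trans_rel S q)\<^sup>*)"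

definition closed_subspace :: "'a set \<Rightarrow> ('a \<Rightarrow> 'a \<Rightarrow> real) \<Rightarrow> 'a set \<Rightarrow> bool" where
  "closed_subspace S q C \<longleftrightarrow> C \<subseteq> S \<and> (\<forall>x\<in>C. \<forall>y\<in>S - C. q x y = 0)"

text \<open>Positive recurrence via the embedded jump chain: the chain started in i returns to i
  with probability one, and the expected return time (sum of the mean sojourn times along
  the first-return path) is finite.\<close>

definition jump_prob :: "'a set \<Rightarrow> ('a \<Rightarrow> 'a \<Rightarrow> real) \<Rightarrow> 'a \<Rightarrow> 'a \<Rightarrow> real" where
  "jump_prob S q x y = (if x = y then 0 else q x y / qout S q x)"

definition first_return_paths :: "'a set \<Rightarrow> 'a \<Rightarrow> 'a list set" where
  "first_return_paths S i =
     {xs. xs \<noteq> [] \<and> last xs = i \<and> set xs \<subseteq> S \<and> i \<notin> set (butlast xs)}"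

definition path_prob :: "'a set \<Rightarrow> ('a \<Rightarrow> 'a \<Rightarrow> real) \<Rightarrow> 'a \<Rightarrow> 'a list \<Rightarrow> real" where
  "path_prob S q i xs = prod_list (map (\<lambda>(x, y). jump_prob S q x y) (zip (i # xs) xs))"

definition return_time :: "'a set \<Rightarrow> ('a \<Rightarrow> 'a \<Rightarrow> real) \<Rightarrow> 'a \<Rightarrow> 'a list \<Rightarrow> real" where
  "return_time S q i xs = sum_list (map (\<lambda>x. 1 / qout S q x) (i # butlast xs))"

definition pos_recurrent :: "'a set \<Rightarrow> ('a \<Rightarrow> 'a \<Rightarrow> real) \<Rightarrow> 'a \<Rightarrow> bool" where
  "pos_recurrent S q i \<longleftrightarrow>
     (path_prob S q i has_sum 1) (first_return_paths S i) \<and>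
     (\<lambda>xs. path_prob S q i xs * return_time S q i xs) summable_on first_return_paths S i"

definition ergodic :: "'a set \<Rightarrow> ('a \<Rightarrow> 'a \<Rightarrow> real) \<Rightarrow> bool" where
  "ergodic S q \<longleftrightarrow> irreducible_chain S q \<and> (\<forall>i\<in>S. pos_recurrent S q i)"

text \<open>Rates of a Jackson-type network on nodes 1..J (0 = outside): total external arrival
  rate a, service intensity s j k at node j holding k customers, extended routing rt.\<close>

definition jackson_q ::
  "nat \<Rightarrow> real \<Rightarrow> (nat \<Rightarrow> nat \<Rightarrow> real) \<Rightarrow> (nat \<Rightarrow> nat \<Rightarrow> real) \<Rightarrow> state \<Rightarrow> state \<Rightarrow> real" where
  "jackson_q J a s rt n m =
     (\<Sum>i\<in>{1..J}. if m = n(i := Suc (n i)) then a * rt 0 i else 0) +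
     (\<Sum>j\<in>{1..J}. if 0 < n j then
        (\<Sum>i\<in>{1..J} - {j}. if m = n(j := n j - 1, i := Suc (n i)) then s j (n j) * rt j i else 0)
        + (if m = n(j := n j - 1) then s j (n j) * rt j 0 else 0)
      else 0)"

definition r_alpha :: "nat \<Rightarrow> (nat \<Rightarrow> nat \<Rightarrow> real) \<Rightarrow> (nat \<Rightarrow> real) \<Rightarrow> nat \<Rightarrow> nat \<Rightarrow> real" where
  "r_alpha J r \<alpha> i j =
     (if i \<noteq> j then r i j * \<alpha> j else 1 - (\<Sum>k\<in>{0..J} - {i}. r i k * \<alpha> k))"

definition gnorm :: "nat \<Rightarrow> (nat \<Rightarrow> real) \<Rightarrow> real" where
  "gnorm J \<gamma> = Max (\<gamma> ` {1..J})"

definition alpha :: "nat \<Rightarrow> (nat \<Rightarrow> real) \<Rightarrow> nat \<Rightarrow> real" where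
  "alpha J \<gamma> j = (if j = 0 then 1 else if gnorm J \<gamma> \<le> 1 then \<gamma> j else \<gamma> j / gnorm J \<gamma>)"

definition beta :: "nat \<Rightarrow> (nat \<Rightarrow> real) \<Rightarrow> real" where
  "beta J \<gamma> = (if gnorm J \<gamma> \<le> 1 then 1 else gnorm J \<gamma>)"

definition q_gamma ::
  "nat \<Rightarrow> real \<Rightarrow> (nat \<Rightarrow> nat \<Rightarrow> real) \<Rightarrow> (nat \<Rightarrow> nat \<Rightarrow> real) \<Rightarrow> (nat \<Rightarrow> real) \<Rightarrow> state \<Rightarrow> state \<Rightarrow> real" where
  "q_gamma J lam \<mu> r \<gamma> =
     jackson_q J (beta J \<gamma> * lam) (\<lambda>j k. \<gamma> j * \<mu> j k) (r_alpha J r (alpha J \<gamma>))"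

definition blocked :: "nat \<Rightarrow> (nat \<Rightarrow> real) \<Rightarrow> nat set" where
  "blocked J \<gamma> = {j\<in>{1..J}. \<gamma> j = 0}"

definition working :: "nat \<Rightarrow> (nat \<Rightarrow> real) \<Rightarrow> nat set" where
  "working J \<gamma> = {1..J} - blocked J \<gamma>"

definition normC :: "(nat \<Rightarrow> real) \<Rightarrow> (nat \<Rightarrow> nat \<Rightarrow> real) \<Rightarrow> nat \<Rightarrow> real" where
  "normC \<eta> \<mu> j = (\<Sum>n. \<Prod>k\<in>{1..n}. \<eta> j / \<mu> j k)"

definition marg :: "(nat \<Rightarrow> real) \<Rightarrow> (nat \<Rightarrow> nat \<Rightarrow> real) \<Rightarrow> nat \<Rightarrow> nat \<Rightarrow> real" where
  "marg \<eta> \<mu> j m = (\<Prod>k\<in>{1..m}. \<eta> j / \<mu> j k) / normC \<eta> \<mu> j"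

definition xi :: "nat \<Rightarrow> (nat \<Rightarrow> real) \<Rightarrow> (nat \<Rightarrow> nat \<Rightarrow> real) \<Rightarrow> state \<Rightarrow> real" where
  "xi J \<eta> \<mu> n = (\<Prod>j\<in>{1..J}. marg \<eta> \<mu> j (n j))"

definition restrict_state :: "nat set \<Rightarrow> state \<Rightarrow> state" where
  "restrict_state I n = (\<lambda>j. if j \<in> I then n j else 0)"

definition xi_phi ::
  "nat \<Rightarrow> (nat \<Rightarrow> real) \<Rightarrow> (nat \<Rightarrow> nat \<Rightarrow> real) \<Rightarrow> (nat \<Rightarrow> real) \<Rightarrow> (state \<Rightarrow> real) \<Rightarrow> state \<Rightarrow> real" where
  "xi_phi J \<eta> \<mu> \<gamma> \<phi> n =
     (\<Prod>j\<in>working J \<gamma>. marg \<eta> \<mu> j (n j)) * \<phi> (restrict_state (blocked J \<gamma>) n)"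

definition fiber :: "nat \<Rightarrow> (nat \<Rightarrow> real) \<Rightarrow> state \<Rightarrow> state set" where
  "fiber J \<gamma> b = {n\<in>states {1..J}. \<forall>j\<in>blocked J \<gamma>. n j = b j}"

end

theory Submission
  imports Defs
begin


lemma has_sum_nonneg_approx:
  fixes f :: "'a \<Rightarrow> real"
  assumes nn: "\<And>x. x\<in>A \<Longrightarrow> 0 \<le> f x"
    and le: "\<And>F. finite F \<Longrightarrow> F \<subseteq> A \<Longrightarrow> sum f F \<le> s"
    and ap: "\<And>e. 0 < e \<Longrightarrow> \<exists>F. finite F \<and> F \<subseteq> A \<and> s - e < sum f F"
  shows "(f has_sum s) A"
proof -
  have bdd: "bdd_above (sum f ` {F. F\<subseteq>A \<and> finite F})"
    using le by (auto intro!: bdd_aboveI)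
  have ne: "{F. finite F \<and> F\<subseteq>A} \<noteq> {}" by auto
  have h: "(f has_sum (SUP F\<in>{F. finite F \<and> F\<subseteq>A}. sum f F)) A"
    using nonneg_bdd_above_has_sum[OF nn bdd] by blast
  have bdd2: "bdd_above (sum f ` {F. finite F \<and> F\<subseteq>A})"
    using le by (auto intro!: bdd_aboveI)
  have "(SUP F\<in>{F. finite F \<and> F\<subseteq>A}. sum f F) \<le> s"
    using le ne by (auto intro!: cSUP_least)
  moreover have "s \<le> (SUP F\<in>{F. finite F \<and> F\<subseteq>A}. sum f F)"
  proof (rule field_le_epsilon)
    fix e :: real assume "0 < e"
    then obtain F where F: "finite F" "F \<subseteq> A" "s - e < sum f F" using ap by blast
    have "sum f F \<le> (SUP F\<in>{F. finite F \<and> F\<subseteq>A}. sum f F)"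
      using F bdd2 by (intro cSUP_upper) auto
    then show "s \<le> (SUP F\<in>{F. finite F \<and> F\<subseteq>A}. sum f F) + e" using F by linarith
  qed
  ultimately have "(SUP F\<in>{F. finite F \<and> F\<subseteq>A}. sum f F) = s" by (rule order_antisym)
  then show ?thesis using h by simp
qed

lemma has_sum_nonneg_le:
  fixes f :: "'a \<Rightarrow> real"
  assumes "(f has_sum s) A" "\<And>x. x\<in>A \<Longrightarrow> 0 \<le> f x" "finite F" "F \<subseteq> A"
  shows "sum f F \<le> s"
  using finite_sum_le_has_sum[OF assms(1,3,4)] assms(2) by blast

lemma has_sum_nonneg_approx_ex:
  fixes f :: "'a \<Rightarrow> real"
  assumes "(f has_sum s) A" "0 < e"
  shows "\<exists>F. finite F \<and> F \<subseteq> A \<and> s - e < sum f F"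
proof -
  have "(sum f \<longlongrightarrow> s) (finite_subsets_at_top A)" using assms(1) by (simp add: has_sum_def)
  then have "\<forall>\<^sub>F F in finite_subsets_at_top A. s - e < sum f F"
    using assms(2) by (intro order_tendstoD) auto
  then obtain F where "finite F" "F \<subseteq> A" "\<forall>Y. finite Y \<and> F \<subseteq> Y \<and> Y \<subseteq> A \<longrightarrow> s - e < sum f Y"
    unfolding eventually_finite_subsets_at_top by blast
  then show ?thesis by blast
qed

lemma has_sum_product_nonneg:
  fixes f g :: "_ \<Rightarrow> real"
  assumes f: "(f has_sum a) A" and g: "(g has_sum b) B"
    and fn: "\<And>x. x\<in>A \<Longrightarrow> 0 \<le> f x" and gn: "\<And>y. y\<in>B \<Longrightarrow> 0 \<le> g y"
  shows "((\<lambda>(x,y). f x * g y) has_sum (a*b)) (A \<times> B)"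
proof (rule has_sum_nonneg_approx)
  have a0: "0 \<le> a" using has_sum_nonneg_le[OF f fn, of "{}"] by simp
  have b0: "0 \<le> b" using has_sum_nonneg_le[OF g gn, of "{}"] by simp
  show "\<And>x. x \<in> A \<times> B \<Longrightarrow> 0 \<le> (case x of (x, y) \<Rightarrow> f x * g y)" using fn gn by auto
  show "sum (\<lambda>(x,y). f x * g y) F \<le> a * b" if F: "finite F" "F \<subseteq> A \<times> B" for F
  proof -
    have "sum (\<lambda>(x,y). f x * g y) F \<le> sum (\<lambda>(x,y). f x * g y) (fst ` F \<times> snd ` F)"
      using F fn gn by (intro sum_mono2) (force intro!: mult_nonneg_nonneg simp: subset_iff)+
    also have "\<dots> = sum f (fst ` F) * sum g (snd ` F)"
      by (simp add: sum_product sum.cartesian_product)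
    also have "\<dots> \<le> a * b"
      using F fn gn by (intro mult_mono has_sum_nonneg_le[OF f fn] has_sum_nonneg_le[OF g gn] a0 sum_nonneg) auto
    finally show ?thesis .
  qed
  show "\<exists>F. finite F \<and> F \<subseteq> A \<times> B \<and> a * b - e < sum (\<lambda>(x,y). f x * g y) F" if e: "0 < e" for e
  proof -
    define d where "d = min 1 (e / (a + b + 1))"
    have p: "0 < a + b + 1" using a0 b0 by linarith
    have d: "0 < d" "d \<le> 1" using e p by (auto simp: d_def)
    have "d \<le> e / (a + b + 1)" by (simp add: d_def)
    then have "d * (a + b + 1) \<le> e" using p by (simp add: pos_le_divide_eq)
    then have d3: "d * (a + b + 1) \<le> e" .
    obtain F1 where F1: "finite F1" "F1 \<subseteq> A" "a - d < sum f F1" using has_sum_nonneg_approx_ex[OF f d(1)] by blast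
    obtain F2 where F2: "finite F2" "F2 \<subseteq> B" "b - d < sum g F2" using has_sum_nonneg_approx_ex[OF g d(1)] by blast
    have s1: "0 \<le> sum f F1" using F1 fn by (auto intro: sum_nonneg)
    have s2: "0 \<le> sum g F2" using F2 gn by (auto intro: sum_nonneg)
    have "sum (\<lambda>(x,y). f x * g y) (F1 \<times> F2) = sum f F1 * sum g F2"
      by (simp add: sum_product sum.cartesian_product)
    moreover have "a * b - e < sum f F1 * sum g F2"
    proof -
      have "max 0 (a - d) * max 0 (b - d) \<le> sum f F1 * sum g F2"
        using F1 F2 s1 s2 by (intro mult_mono) auto
      moreover have "a * b - e < max 0 (a - d) * max 0 (b - d)"
      proof (cases "a \<le> d \<or> b \<le> d")
        case True
        have "a * b \<le> d * (a + b)"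
        proof (cases "a \<le> d")
          case True then have "a * b \<le> d * b" using b0 by (simp add: mult_right_mono)
          moreover have "0 \<le> d * a" using a0 d by simp
          ultimately show ?thesis by (simp add: distrib_left)
        next
          case False then have "b \<le> d" using \<open>a \<le> d \<or> b \<le> d\<close> by simp
          then have "a * b \<le> a * d" using a0 by (simp add: mult_left_mono)
          moreover have "0 \<le> d * b" using b0 d by simp
          ultimately show ?thesis by (simp add: distrib_left mult.commute)
        qed
        moreover have "d * (a + b) < d * (a + b + 1)" using d by simp
        moreover have "0 \<le> max 0 (a - d) * max 0 (b - d)" by simp
        ultimately show ?thesis using d3 by linarith
      next
        case False
        then have "max 0 (a - d) * max 0 (b - d) = (a - d) * (b - d)" by simp
        also have "\<dots> = a * b - d * (a + b) + d * d" by (simp add: algebra_simps)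
        finally have eq: "max 0 (a - d) * max 0 (b - d) = a * b - d * (a + b) + d * d" .
        have "d * (a + b) < d * (a + b + 1)" using d by simp
        moreover have "0 \<le> d * d" by simp
        ultimately show ?thesis using eq d3 by linarith
      qed
      ultimately show ?thesis by linarith
    qed
    ultimately show ?thesis using F1 F2 by (intro exI[of _ "F1 \<times> F2"]) auto
  qed
qed




lemma states_insert_bij:
  assumes "a \<notin> I"
  shows "(\<lambda>(k, m). m(a := k)) ` (UNIV \<times> states I) = states (insert a I)"
    and "inj_on (\<lambda>(k, m). m(a := k)) (UNIV \<times> states I)"
proof -
  show "(\<lambda>(k, m). m(a := k)) ` (UNIV \<times> states I) = states (insert a I)"
  proof
    show "(\<lambda>(k, m). m(a := k)) ` (UNIV \<times> states I) \<subseteq> states (insert a I)"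
      by (auto simp: states_def)
    show "states (insert a I) \<subseteq> (\<lambda>(k, m). m(a := k)) ` (UNIV \<times> states I)"
    proof
      fix n assume n: "n \<in> states (insert a I)"
      have "n = (\<lambda>(k, m). m(a := k)) (n a, n(a := 0))" by auto
      moreover have "n(a := 0) \<in> states I" using n by (auto simp: states_def)
      ultimately show "n \<in> (\<lambda>(k, m). m(a := k)) ` (UNIV \<times> states I)" by blast
    qed
  qed
  show "inj_on (\<lambda>(k, m). m(a := k)) (UNIV \<times> states I)"
  proof (rule inj_onI, clarsimp)
    fix k m k' m' assume m: "m \<in> states I" "m' \<in> states I" and e: "m(a := k) = m'(a := k')"
    have "k = k'" using fun_cong[OF e, of a] by simp
    moreover have "m = m'"
    proof
      fix x show "m x = m' x"
        using fun_cong[OF e, of x] m assms by (cases "x = a") (auto simp: states_def)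
    qed
    ultimately show "k = k' \<and> m = m'" by simp
  qed
qed

lemma has_sum_prod_states:
  fixes f :: "nat \<Rightarrow> nat \<Rightarrow> real"
  assumes "finite I"
    and "\<And>j. j \<in> I \<Longrightarrow> (f j has_sum s j) UNIV"
    and "\<And>j k. j \<in> I \<Longrightarrow> 0 \<le> f j k"
  shows "((\<lambda>n. \<Prod>j\<in>I. f j (n j)) has_sum (\<Prod>j\<in>I. s j)) (states I)"
  using assms
proof (induction I rule: finite_induct)
  case empty
  have "states {} = {\<lambda>_. 0}" by (auto simp: states_def)
  then show ?case by (simp add: has_sum_finiteI)
next
  case (insert a I)
  let ?h = "\<lambda>(k::nat, m::nat \<Rightarrow> nat). m(a := k)"
  have IH: "((\<lambda>n. \<Prod>j\<in>I. f j (n j)) has_sum (\<Prod>j\<in>I. s j)) (states I)"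
    by (rule insert.IH) (use insert.prems in auto)
  have fa: "(f a has_sum s a) UNIV" using insert.prems(1) by simp
  have P: "((\<lambda>(k, m). f a k * (\<Prod>j\<in>I. f j (m j))) has_sum (s a * (\<Prod>j\<in>I. s j))) (UNIV \<times> states I)"
  proof (rule has_sum_product_nonneg[OF fa IH])
    show "0 \<le> f a x" for x using insert.prems(2)[of a x] by simp
    show "0 \<le> (\<Prod>j\<in>I. f j (y j))" for y
      by (rule prod_nonneg) (use insert.prems(2) in blast)
  qed
  have eq: "((\<lambda>n. \<Prod>j\<in>insert a I. f j (n j)) \<circ> ?h) x = (\<lambda>(k, m). f a k * (\<Prod>j\<in>I. f j (m j))) x"
    if "x \<in> UNIV \<times> states I" for x
  proof -
    obtain k m where x: "x = (k, m)" by force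
    have "(\<Prod>j\<in>I. f j ((m(a := k)) j)) = (\<Prod>j\<in>I. f j (m j))"
      using insert(2) by (intro prod.cong) auto
    then show ?thesis using insert(1,2) x by simp
  qed
  have H: "((\<lambda>n. \<Prod>j\<in>insert a I. f j (n j)) \<circ> ?h has_sum (s a * (\<Prod>j\<in>I. s j))) (UNIV \<times> states I)"
    by (rule has_sum_cong[THEN iffD2, OF eq P])
  have "((\<lambda>n. \<Prod>j\<in>insert a I. f j (n j)) has_sum (s a * (\<Prod>j\<in>I. s j))) (?h ` (UNIV \<times> states I))"
    unfolding has_sum_reindex[OF states_insert_bij(2)[OF insert(2)]] by (rule H)
  then show ?case using states_insert_bij(1)[OF insert(2)] insert(1,2) by simp
qed




locale prc =
  fixes S :: "'a set" and q :: "'a \<Rightarrow> 'a \<Rightarrow> real" and i :: 'a and \<pi> :: "'a \<Rightarrow> real"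
  assumes iS: "i \<in> S"
    and q_nn: "\<And>x y. x \<in> S \<Longrightarrow> y \<in> S \<Longrightarrow> x \<noteq> y \<Longrightarrow> 0 \<le> q x y"
    and fin: "\<And>x. x \<in> S \<Longrightarrow> finite {y\<in>S. y \<noteq> x \<and> q x y \<noteq> 0}"
    and qpos: "\<And>x. x \<in> S \<Longrightarrow> 0 < qout S q x"
    and pipos: "\<And>x. x \<in> S \<Longrightarrow> 0 < \<pi> x"
    and db: "\<And>x y. x \<in> S \<Longrightarrow> y \<in> S \<Longrightarrow> \<pi> x * q x y = \<pi> y * q y x"
    and sum_nu: "(\<lambda>x. \<pi> x * qout S q x) summable_on S"
    and sum_pi: "\<pi> summable_on S"
begin

definition succ where "succ x = {y\<in>S. y \<noteq> x \<and> q x y \<noteq> 0}"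
definition P where "P = jump_prob S q"
definition pp where "pp = path_prob S q i"
definition lastp where "lastp ys = last (i # ys)"
definition ext :: "'a list set \<Rightarrow> 'a list set" where
  "ext A = (\<Union>ys\<in>A. (\<lambda>y. ys @ [y]) ` succ (lastp ys))"

fun En :: "nat \<Rightarrow> 'a list set" where
  "En 0 = {[]}"
| "En (Suc n) = {xs \<in> ext (En n). last xs \<noteq> i}"

definition R where "R n = {xs \<in> ext (En n). last xs = i}"
definition nu where "nu x = \<pi> x * qout S q x"
definition a where "a n x = sum pp {ys \<in> En n. lastp ys = x}"
definition g where "g n = sum pp (En n)"
definition w where "w ys = sum_list (map (\<lambda>x. 1 / qout S q x) (i # ys))"

lemma succ_sym: "x \<in> S \<Longrightarrow> y \<in> S \<Longrightarrow> y \<in> succ x \<longleftrightarrow> x \<in> succ y"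
proof -
  assume x: "x \<in> S" and yS: "y \<in> S"
  have *: "q x y \<noteq> 0 \<longleftrightarrow> q y x \<noteq> 0" if y: "y \<in> S"
    using db[OF x y] pipos[OF x] pipos[OF y] by (metis mult_eq_0_iff less_irrefl)
  show ?thesis using *[OF yS] x yS by (auto simp: succ_def)
qed

lemma succ_fin: "x \<in> S \<Longrightarrow> finite (succ x)"
  using fin by (simp add: succ_def)

lemma succ_S: "succ x \<subseteq> S" by (auto simp: succ_def)

lemma qout_eq: "x \<in> S \<Longrightarrow> qout S q x = sum (q x) (succ x)"
proof -
  assume x: "x \<in> S"
  have "infsum (q x) (S - {x}) = infsum (q x) {y\<in>S. y \<noteq> x \<and> q x y \<noteq> 0}"
    by (rule infsum_cong_neutral) auto
  then show ?thesis using fin[OF x] by (simp add: qout_def succ_def)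
qed

lemma P_nn: "x \<in> S \<Longrightarrow> y \<in> S \<Longrightarrow> 0 \<le> P x y"
  using q_nn qpos[of x] by (auto simp: P_def jump_prob_def)

lemma P_zero: "x \<in> S \<Longrightarrow> y \<notin> succ x \<Longrightarrow> y \<in> S \<Longrightarrow> P x y = 0"
  by (auto simp: P_def jump_prob_def succ_def)

lemma P_sum: "x \<in> S \<Longrightarrow> sum (P x) (succ x) = 1"
proof -
  assume x: "x \<in> S"
  have "sum (P x) (succ x) = sum (\<lambda>y. q x y / qout S q x) (succ x)"
    by (rule sum.cong) (auto simp: P_def jump_prob_def succ_def)
  also have "\<dots> = sum (q x) (succ x) / qout S q x" by (simp add: sum_divide_distrib)
  also have "\<dots> = 1" using qout_eq[OF x] qpos[OF x] by simp
  finally show ?thesis .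
qed

lemma zip_snoc: "zip (b # ys @ [y]) (ys @ [y]) = zip (b # ys) ys @ [(last (b # ys), y)]"
  by (induction ys arbitrary: b) auto

lemma pp_snoc: "pp (ys @ [y]) = pp ys * P (lastp ys) y"
  unfolding pp_def path_prob_def lastp_def P_def
  by (simp add: zip_snoc)

lemma pp_nil: "pp [] = 1" by (simp add: pp_def path_prob_def)

lemma lastp_snoc[simp]: "lastp (ys @ [y]) = y" by (simp add: lastp_def)

lemma pp_nn: "set ys \<subseteq> S \<Longrightarrow> 0 \<le> pp ys"
proof (induction ys rule: rev_induct)
  case Nil then show ?case by (simp add: pp_nil)
next
  case (snoc y ys)
  have "lastp ys \<in> S" using snoc iS by (auto simp: lastp_def)
  then show ?case using snoc P_nn[of "lastp ys" y] by (simp add: pp_snoc)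
qed

lemma En_props: "ys \<in> En n \<Longrightarrow> length ys = n \<and> set ys \<subseteq> S - {i} \<and> lastp ys \<in> S"
proof (induction n arbitrary: ys)
  case 0 then show ?case using iS by (simp add: lastp_def)
next
  case (Suc n)
  then obtain zs y where "zs \<in> En n" "y \<in> succ (lastp zs)" "ys = zs @ [y]" "y \<noteq> i"
    by (auto simp: ext_def)
  then show ?case using Suc.IH[of zs] succ_S by auto
qed

lemma En_fin: "finite (En n)"
proof (induction n)
  case 0 then show ?case by simp
next
  case (Suc n)
  have "finite (ext (En n))" unfolding ext_def
    using Suc En_props succ_fin by auto
  then show ?case by simp
qed

lemma ext_sum:
  assumes "finite A" "\<And>ys. ys \<in> A \<Longrightarrow> lastp ys \<in> S"
  shows "sum h (ext A) = (\<Sum>ys\<in>A. \<Sum>y\<in>succ (lastp ys). h (ys @ [y]))"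
proof -
  have "sum h (ext A) = (\<Sum>ys\<in>A. sum h ((\<lambda>y. ys @ [y]) ` succ (lastp ys)))"
    unfolding ext_def using assms succ_fin
    by (intro sum.UNION_disjoint) auto
  also have "\<dots> = (\<Sum>ys\<in>A. \<Sum>y\<in>succ (lastp ys). h (ys @ [y]))"
    by (intro sum.cong refl, subst sum.reindex) (auto simp: inj_on_def)
  finally show ?thesis .
qed

lemma ext_split: "ext (En n) = En (Suc n) \<union> R n" "En (Suc n) \<inter> R n = {}"
  by (auto simp: R_def)

lemma ext_fin: "finite (ext (En n))"
  unfolding ext_def using En_fin En_props succ_fin by auto

lemma R_fin: "finite (R n)" using ext_fin by (simp add: R_def)

lemma g_step: "g n = g (Suc n) + sum pp (R n)"
proof -
  have "sum pp (ext (En n)) = (\<Sum>ys\<in>En n. \<Sum>y\<in>succ (lastp ys). pp (ys @ [y]))"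
    using En_fin En_props by (intro ext_sum) auto
  also have "\<dots> = (\<Sum>ys\<in>En n. pp ys * sum (P (lastp ys)) (succ (lastp ys)))"
    by (simp add: pp_snoc sum_distrib_left)
  also have "\<dots> = g n" unfolding g_def using En_props P_sum by (intro sum.cong) auto
  finally have "g n = sum pp (ext (En n))" ..
  also have "\<dots> = sum pp (En (Suc n) \<union> R n)" unfolding ext_split(1) ..
  also have "\<dots> = g (Suc n) + sum pp (R n)"
    unfolding g_def by (rule sum.union_disjoint[OF En_fin R_fin ext_split(2)])
  finally show ?thesis .
qed

lemma a0: "a 0 x = (if x = i then 1 else 0)"
  by (auto simp: a_def lastp_def pp_nil)

lemma En_Suc_last: "zs \<in> En (Suc n) \<Longrightarrow> \<exists>ys y. zs = ys @ [y] \<and> ys \<in> En n \<and> y \<in> succ (lastp ys) \<and> y \<noteq> i"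
  by (auto simp: ext_def)

lemma a_Suc_i: "a (Suc n) i = 0"
proof -
  have "{ys \<in> En (Suc n). lastp ys = i} = {}"
  proof (rule ccontr)
    assume "{ys \<in> En (Suc n). lastp ys = i} \<noteq> {}"
    then obtain zs where "zs \<in> En (Suc n)" "lastp zs = i" by blast
    then show False using En_Suc_last[of zs n] by auto
  qed
  then show ?thesis unfolding a_def by (metis sum.empty)
qed

lemma a_Suc:
  assumes y: "y \<in> S" "y \<noteq> i"
  shows "a (Suc n) y = (\<Sum>x\<in>succ y. a n x * P x y)"
proof -
  let ?S0 = "{ys \<in> En n. lastp ys \<in> succ y}"
  have set: "{zs \<in> En (Suc n). lastp zs = y} = (\<lambda>ys. ys @ [y]) ` ?S0"
  proof
    show "{zs \<in> En (Suc n). lastp zs = y} \<subseteq> (\<lambda>ys. ys @ [y]) ` ?S0"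
    proof
      fix zs assume "zs \<in> {zs \<in> En (Suc n). lastp zs = y}"
      then obtain ys y' where "zs = ys @ [y']" "ys \<in> En n" "y' \<in> succ (lastp ys)" "lastp zs = y"
        using En_Suc_last by blast
      moreover have "lastp ys \<in> S" using En_props \<open>ys \<in> En n\<close> by blast
      moreover have "y' \<in> S" using \<open>y' \<in> succ (lastp ys)\<close> succ_S by blast
      ultimately show "zs \<in> (\<lambda>ys. ys @ [y]) ` ?S0" using succ_sym[of "lastp ys" y'] by auto
    qed
    show "(\<lambda>ys. ys @ [y]) ` ?S0 \<subseteq> {zs \<in> En (Suc n). lastp zs = y}"
    proof
      fix zs assume "zs \<in> (\<lambda>ys. ys @ [y]) ` ?S0"
      then obtain ys where ys: "zs = ys @ [y]" "ys \<in> En n" "lastp ys \<in> succ y" by blast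
      moreover have "lastp ys \<in> S" using ys(3) succ_S by blast
      ultimately have "y \<in> succ (lastp ys)" using succ_sym[of "lastp ys" y] y by blast
      then show "zs \<in> {zs \<in> En (Suc n). lastp zs = y}" using ys y by (auto simp: ext_def)
    qed
  qed
  have "a (Suc n) y = sum pp ((\<lambda>ys. ys @ [y]) ` ?S0)" unfolding a_def set ..
  also have "\<dots> = (\<Sum>ys\<in>?S0. pp ys * P (lastp ys) y)"
    by (subst sum.reindex) (auto simp: inj_on_def pp_snoc)
  also have "\<dots> = (\<Sum>x\<in>succ y. \<Sum>ys\<in>{ys \<in> ?S0. lastp ys = x}. pp ys * P (lastp ys) y)"
    using En_fin succ_fin[OF y(1)] by (intro sum.group[symmetric]) auto
  also have "\<dots> = (\<Sum>x\<in>succ y. a n x * P x y)"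
  proof (intro sum.cong refl)
    fix x assume x: "x \<in> succ y"
    have e: "{ys \<in> ?S0. lastp ys = x} = {ys \<in> En n. lastp ys = x}" using x by blast
    have "(\<Sum>ys\<in>{ys \<in> ?S0. lastp ys = x}. pp ys * P (lastp ys) y) = (\<Sum>ys\<in>{ys \<in> En n. lastp ys = x}. pp ys * P x y)"
      unfolding e by (rule sum.cong) auto
    also have "\<dots> = a n x * P x y" by (simp add: a_def sum_distrib_right)
    finally show "(\<Sum>ys\<in>{ys \<in> ?S0. lastp ys = x}. pp ys * P (lastp ys) y) = a n x * P x y" .
  qed
  finally show ?thesis .
qed

lemma a_nn: "0 \<le> a n x"
  unfolding a_def using En_props by (intro sum_nonneg pp_nn) auto

lemma nu_pos: "x \<in> S \<Longrightarrow> 0 < nu x"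
  using pipos qpos by (simp add: nu_def)

lemma nu_balance: "y \<in> S \<Longrightarrow> (\<Sum>x\<in>succ y. P x y * nu x) = nu y"
proof -
  assume y: "y \<in> S"
  have "(\<Sum>x\<in>succ y. P x y * nu x) = (\<Sum>x\<in>succ y. \<pi> x * q x y)"
  proof (intro sum.cong refl)
    fix x assume "x \<in> succ y"
    then have x: "x \<in> S" "x \<noteq> y" by (auto simp: succ_def)
    then show "P x y * nu x = \<pi> x * q x y" using qpos[OF x(1)]
      by (simp add: P_def jump_prob_def nu_def)
  qed
  also have "\<dots> = (\<Sum>x\<in>succ y. \<pi> y * q y x)"
    using db y succ_S by (intro sum.cong) auto
  also have "\<dots> = nu y" by (simp add: nu_def qout_eq[OF y] sum_distrib_left)
  finally show ?thesis .
qed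

lemma a_bound: "x \<in> S \<Longrightarrow> nu i * (\<Sum>n\<le>N. a n x) \<le> nu x"
proof (induction N arbitrary: x)
  case 0 then show ?case using nu_pos by (auto simp: a0 less_imp_le)
next
  case (Suc N)
  show ?case
  proof (cases "x = i")
    case True
    have "(\<Sum>n\<le>Suc N. a n x) = a 0 x + (\<Sum>n\<le>N. a (Suc n) x)"
      by (subst sum.atMost_Suc_shift) simp
    also have "\<dots> = 1" using True a_Suc_i by (simp add: a0)
    finally show ?thesis using True by simp
  next
    case False
    have "(\<Sum>n\<le>Suc N. a n x) = a 0 x + (\<Sum>n\<le>N. a (Suc n) x)"
      by (subst sum.atMost_Suc_shift) simp
    also have "\<dots> = (\<Sum>n\<le>N. \<Sum>z\<in>succ x. a n z * P z x)"
      using False Suc.prems by (simp add: a0 a_Suc)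
    also have "\<dots> = (\<Sum>z\<in>succ x. P z x * (\<Sum>n\<le>N. a n z))"
      by (subst sum.swap) (simp add: sum_distrib_left mult.commute)
    finally have eq: "(\<Sum>n\<le>Suc N. a n x) = (\<Sum>z\<in>succ x. P z x * (\<Sum>n\<le>N. a n z))" .
    have "nu i * (\<Sum>z\<in>succ x. P z x * (\<Sum>n\<le>N. a n z)) = (\<Sum>z\<in>succ x. P z x * (nu i * (\<Sum>n\<le>N. a n z)))"
      by (simp add: sum_distrib_left algebra_simps)
    also have "\<dots> \<le> (\<Sum>z\<in>succ x. P z x * nu z)"
    proof (intro sum_mono mult_left_mono)
      fix z assume "z \<in> succ x"
      then have z: "z \<in> S" using succ_S by blast
      show "nu i * (\<Sum>n\<le>N. a n z) \<le> nu z" using Suc.IH[OF z] .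
      show "0 \<le> P z x" using P_nn[OF z Suc.prems] .
    qed
    also have "\<dots> = nu x" using nu_balance Suc.prems by blast
    finally show ?thesis using eq by simp
  qed
qed

lemma sum_a_group:
  assumes "finite T" "lastp ` En n \<subseteq> T"
  shows "(\<Sum>x\<in>T. a n x * c x) = (\<Sum>ys\<in>En n. pp ys * c (lastp ys))"
proof -
  have "(\<Sum>ys\<in>En n. pp ys * c (lastp ys)) = (\<Sum>x\<in>T. \<Sum>ys\<in>{ys\<in>En n. lastp ys = x}. pp ys * c (lastp ys))"
    using assms En_fin by (intro sum.group[symmetric]) auto
  also have "\<dots> = (\<Sum>x\<in>T. a n x * c x)"
  proof (intro sum.cong refl)
    fix x assume x: "x \<in> T"
    have "(\<Sum>ys\<in>{ys\<in>En n. lastp ys = x}. pp ys * c (lastp ys)) = (\<Sum>ys\<in>{ys\<in>En n. lastp ys = x}. pp ys * c x)"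
      by (rule sum.cong) auto
    also have "\<dots> = a n x * c x" by (simp add: a_def sum_distrib_right)
    finally show "(\<Sum>ys\<in>{ys\<in>En n. lastp ys = x}. pp ys * c (lastp ys)) = a n x * c x" .
  qed
  finally show ?thesis ..
qed

definition TN where "TN N = (\<Union>n\<le>N. lastp ` En n)"

lemma TN_fin: "finite (TN N)" unfolding TN_def using En_fin by auto
lemma TN_S: "TN N \<subseteq> S" unfolding TN_def using En_props by auto

lemma sum_a_bound:
  assumes c: "\<And>x. x \<in> S \<Longrightarrow> 0 \<le> c x"
  shows "(\<Sum>n\<le>N. \<Sum>ys\<in>En n. pp ys * c (lastp ys)) \<le> (\<Sum>x\<in>TN N. nu x * c x) / nu i"
proof -
  have "(\<Sum>n\<le>N. \<Sum>ys\<in>En n. pp ys * c (lastp ys)) = (\<Sum>n\<le>N. \<Sum>x\<in>TN N. a n x * c x)"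
    using TN_fin by (intro sum.cong refl sum_a_group[symmetric]) (auto simp: TN_def)
  also have "\<dots> = (\<Sum>x\<in>TN N. (\<Sum>n\<le>N. a n x) * c x)"
    by (subst sum.swap) (simp add: sum_distrib_right)
  also have "\<dots> \<le> (\<Sum>x\<in>TN N. (nu x / nu i) * c x)"
  proof (intro sum_mono mult_right_mono)
    fix x assume "x \<in> TN N"
    then have x: "x \<in> S" using TN_S by blast
    show "(\<Sum>n\<le>N. a n x) \<le> nu x / nu i"
      using a_bound[OF x, of N] nu_pos[OF iS] by (simp add: pos_le_divide_eq mult.commute)
    show "0 \<le> c x" using c x .
  qed
  also have "\<dots> = (\<Sum>x\<in>TN N. nu x * c x) / nu i" by (simp add: sum_divide_distrib)
  finally show ?thesis .
qed

lemma nu_nn: "x \<in> S \<Longrightarrow> 0 \<le> nu x" using nu_pos less_imp_le by blast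

lemma g_nn: "0 \<le> g n" unfolding g_def using En_props by (intro sum_nonneg pp_nn) auto

lemma g_summable: "summable g"
proof (rule bounded_imp_summable)
  show "0 \<le> g n" for n by (rule g_nn)
  show "(\<Sum>k\<le>N. g k) \<le> infsum nu S / nu i" for N
  proof -
    have "(\<Sum>k\<le>N. g k) = (\<Sum>n\<le>N. \<Sum>ys\<in>En n. pp ys * (\<lambda>_. 1) (lastp ys))" by (simp add: g_def)
    also have "\<dots> \<le> (\<Sum>x\<in>TN N. nu x * 1) / nu i"
      by (rule sum_a_bound) simp
    also have "\<dots> \<le> infsum nu S / nu i"
    proof -
      have "(\<Sum>x\<in>TN N. nu x) \<le> infsum nu S"
        using sum_nu TN_fin TN_S nu_nn by (intro finite_sum_le_infsum) (auto simp: nu_def[abs_def])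
      then show ?thesis using nu_pos[OF iS] by (simp add: divide_right_mono)
    qed
    finally show ?thesis .
  qed
qed

lemma g_lim: "g \<longlonglongrightarrow> 0"
  using g_summable summable_LIMSEQ_zero by blast

lemma g0: "g 0 = 1" by (simp add: g_def pp_nil)

lemma ret_sum: "(\<Sum>n<N. sum pp (R n)) = 1 - g N"
proof (induction N)
  case 0 then show ?case by (simp add: g0)
next
  case (Suc N)
  have "(\<Sum>n<Suc N. sum pp (R n)) = (\<Sum>n<N. sum pp (R n)) + sum pp (R N)" by simp
  then show ?case using Suc g_step[of N] by linarith
qed

lemma R_props: "xs \<in> R n \<Longrightarrow> \<exists>ys. xs = ys @ [i] \<and> ys \<in> En n \<and> i \<in> succ (lastp ys)"
  by (auto simp: R_def ext_def)

lemma R_len: "xs \<in> R n \<Longrightarrow> length xs = Suc n"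
  using R_props En_props by fastforce

lemma R_FRP: "R n \<subseteq> first_return_paths S i"
proof
  fix xs assume "xs \<in> R n"
  then obtain ys where "xs = ys @ [i]" "ys \<in> En n" using R_props by blast
  then show "xs \<in> first_return_paths S i" using En_props[of ys n] iS
    by (auto simp: first_return_paths_def)
qed

lemma in_En: "set ys \<subseteq> S - {i} \<Longrightarrow> pp ys \<noteq> 0 \<Longrightarrow> ys \<in> En (length ys)"
proof (induction ys rule: rev_induct)
  case Nil then show ?case by simp
next
  case (snoc y ys)
  have ih: "ys \<in> En (length ys)" using snoc pp_snoc by auto
  have l: "lastp ys \<in> S" using En_props[OF ih] by blast
  have "P (lastp ys) y \<noteq> 0" using snoc pp_snoc by auto
  then have "y \<in> succ (lastp ys)" using snoc l by (auto simp: P_def jump_prob_def succ_def split: if_splits)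
  then show ?case using ih snoc by (auto simp: ext_def)
qed

lemma FRP_R:
  assumes "xs \<in> first_return_paths S i" "pp xs \<noteq> 0"
  shows "xs \<in> R (length xs - 1)"
proof -
  from assms(1) have ne: "xs \<noteq> []" and l: "last xs = i" and s: "set xs \<subseteq> S" and b: "i \<notin> set (butlast xs)"
    by (auto simp: first_return_paths_def)
  define ys where "ys = butlast xs"
  have xs: "xs = ys @ [i]" using append_butlast_last_id[OF ne] l by (simp add: ys_def)
  have ys: "set ys \<subseteq> S - {i}" using s b xs by auto
  have pys: "pp ys \<noteq> 0" using assms(2) xs pp_snoc by auto
  have E: "ys \<in> En (length ys)" using in_En[OF ys pys] .
  have lS: "lastp ys \<in> S" using En_props[OF E] by blast
  have "P (lastp ys) i \<noteq> 0" using assms(2) xs pp_snoc by auto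
  then have "i \<in> succ (lastp ys)" using lS iS by (auto simp: P_def jump_prob_def succ_def split: if_splits)
  then show ?thesis using E xs by (auto simp: R_def ext_def)
qed

lemma sum_UR: "sum h (\<Union>n<N. R n) = (\<Sum>n<N. sum h (R n))"
  apply (intro sum.UNION_disjoint)
  using R_fin apply blast+
  using R_len by (metis Suc_inject disjoint_iff)

lemma FRP_S: "xs \<in> first_return_paths S i \<Longrightarrow> set xs \<subseteq> S"
  by (simp add: first_return_paths_def)

lemma FRP_cover:
  assumes "finite F" "F \<subseteq> first_return_paths S i"
  shows "\<exists>N. {xs\<in>F. pp xs \<noteq> 0} \<subseteq> (\<Union>n<N. R n)"
proof -
  define N where "N = Suc (Max (insert 0 (length ` F)))"
  have "{xs\<in>F. pp xs \<noteq> 0} \<subseteq> (\<Union>n<N. R n)"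
  proof
    fix xs assume xs: "xs \<in> {xs\<in>F. pp xs \<noteq> 0}"
    then have "xs \<in> R (length xs - 1)" using assms FRP_R by blast
    moreover have "length xs \<le> Max (insert 0 (length ` F))" using xs assms(1) by (intro Max_ge) auto
    then have "length xs - 1 < N" unfolding N_def by linarith
    ultimately show "xs \<in> (\<Union>n<N. R n)" by blast
  qed
  then show ?thesis by blast
qed

lemma return_prob: "(pp has_sum 1) (first_return_paths S i)"
proof (rule has_sum_nonneg_approx)
  show "0 \<le> pp x" if "x \<in> first_return_paths S i" for x
    using that FRP_S pp_nn by blast
  show "sum pp F \<le> 1" if F: "finite F" "F \<subseteq> first_return_paths S i" for F
  proof -
    obtain N where N: "{xs\<in>F. pp xs \<noteq> 0} \<subseteq> (\<Union>n<N. R n)" using FRP_cover[OF F] by blast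
    have "sum pp F = sum pp {xs\<in>F. pp xs \<noteq> 0}"
      using F by (intro sum.mono_neutral_right) auto
    also have "\<dots> \<le> sum pp (\<Union>n<N. R n)"
    proof (rule sum_mono2)
      show "finite (\<Union>n<N. R n)" using R_fin by auto
      show "{xs\<in>F. pp xs \<noteq> 0} \<subseteq> (\<Union>n<N. R n)" by (rule N)
      show "0 \<le> pp b" if "b \<in> (\<Union>n<N. R n) - {xs\<in>F. pp xs \<noteq> 0}" for b
        using that R_FRP FRP_S pp_nn by blast
    qed
    also have "\<dots> = 1 - g N" using sum_UR[of pp N] ret_sum[of N] by linarith
    also have "\<dots> \<le> 1" using g_nn by simp
    finally show ?thesis .
  qed
  show "\<exists>F. finite F \<and> F \<subseteq> first_return_paths S i \<and> 1 - e < sum pp F" if e: "0 < e" for e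
  proof -
    obtain N where "norm (g N - 0) < e" using LIMSEQ_D[OF g_lim e] by blast
    then have "1 - e < 1 - g N" by simp
    moreover have "1 - g N = sum pp (\<Union>n<N. R n)" using sum_UR[of pp N] ret_sum[of N] by linarith
    moreover have "(\<Union>n<N. R n) \<subseteq> first_return_paths S i" using R_FRP by blast
    moreover have "finite (\<Union>n<N. R n)" using R_fin by auto
    ultimately show ?thesis by (intro exI[of _ "(\<Union>n<N. R n)"]) simp
  qed
qed

definition t where "t n = (\<Sum>ys\<in>En n. pp ys * w ys)"
definition d where "d n = (\<Sum>ys\<in>En n. pp ys * (1 / qout S q (lastp ys)))"
definition u where "u n = (\<Sum>xs\<in>R n. pp xs * return_time S q i xs)"

lemma w_snoc: "w (ys @ [y]) = w ys + 1 / qout S q y"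
  by (simp add: w_def)

lemma rt_w: "return_time S q i xs = w (butlast xs)"
  by (simp add: return_time_def w_def)

lemma w_nn: "set ys \<subseteq> S \<Longrightarrow> 0 \<le> w ys"
  unfolding w_def using qpos iS by (intro sum_list_nonneg) (auto simp: less_imp_le)

lemma t_nn: "0 \<le> t n" unfolding t_def using En_props
  by (intro sum_nonneg mult_nonneg_nonneg pp_nn w_nn) auto

lemma d_nn: "0 \<le> d n" unfolding d_def using En_props qpos
  by (intro sum_nonneg mult_nonneg_nonneg pp_nn) (auto simp: less_imp_le)

lemma t_step: "t n = (t (Suc n) - d (Suc n)) + u n"
proof -
  let ?h = "\<lambda>zs. pp zs * w (butlast zs)"
  have "sum ?h (ext (En n)) = (\<Sum>ys\<in>En n. \<Sum>y\<in>succ (lastp ys). ?h (ys @ [y]))"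
    using En_fin En_props by (intro ext_sum) auto
  also have "\<dots> = (\<Sum>ys\<in>En n. pp ys * w ys * sum (P (lastp ys)) (succ (lastp ys)))"
  proof (intro sum.cong refl)
    fix ys
    have "(\<Sum>y\<in>succ (lastp ys). ?h (ys @ [y])) = (\<Sum>y\<in>succ (lastp ys). (pp ys * w ys) * P (lastp ys) y)"
      by (intro sum.cong refl) (simp add: pp_snoc)
    also have "\<dots> = pp ys * w ys * sum (P (lastp ys)) (succ (lastp ys))"
      by (rule sum_distrib_left[symmetric])
    finally show "(\<Sum>y\<in>succ (lastp ys). ?h (ys @ [y])) = pp ys * w ys * sum (P (lastp ys)) (succ (lastp ys))" .
  qed
  also have "\<dots> = t n" unfolding t_def using En_props P_sum by (intro sum.cong) auto
  finally have 1: "t n = sum ?h (ext (En n))" ..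
  have 2: "sum ?h (ext (En n)) = sum ?h (En (Suc n)) + sum ?h (R n)"
    unfolding ext_split(1) by (rule sum.union_disjoint[OF En_fin R_fin ext_split(2)])
  have 3: "sum ?h (R n) = u n" unfolding u_def rt_w ..
  have "sum ?h (En (Suc n)) = (\<Sum>zs\<in>En (Suc n). pp zs * w zs - pp zs * (1 / qout S q (lastp zs)))"
  proof (intro sum.cong refl)
    fix zs assume "zs \<in> En (Suc n)"
    then obtain ys y where "zs = ys @ [y]" using En_Suc_last by blast
    then show "?h zs = pp zs * w zs - pp zs * (1 / qout S q (lastp zs))"
      by (simp add: w_snoc algebra_simps)
  qed
  also have "\<dots> = t (Suc n) - d (Suc n)"
    unfolding t_def d_def by (simp add: sum_subtractf)
  finally show ?thesis using 1 2 3 by linarith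
qed

lemma u_sum: "(\<Sum>n<N. u n) = t 0 - t N + (\<Sum>n<N. d (Suc n))"
proof (induction N)
  case 0 then show ?case by simp
next
  case (Suc N)
  have a1: "(\<Sum>n<Suc N. u n) = (\<Sum>n<N. u n) + u N" by simp
  have a2: "(\<Sum>n<Suc N. d (Suc n)) = (\<Sum>n<N. d (Suc n)) + d (Suc N)" by simp
  show ?case using a1 a2 Suc.IH t_step[of N] by linarith
qed

lemma pi_nn: "x \<in> S \<Longrightarrow> 0 \<le> \<pi> x" using pipos less_imp_le by blast

lemma u_bound: "(\<Sum>n<N. u n) \<le> 1 / qout S q i + infsum \<pi> S / nu i"
proof -
  have "(\<Sum>n<N. d (Suc n)) \<le> (\<Sum>n\<le>N. d n)"
  proof -
    have "(\<Sum>n<N. d (Suc n)) \<le> d 0 + (\<Sum>n<N. d (Suc n))" using d_nn by simp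
    also have "\<dots> = (\<Sum>n\<le>N. d n)"
      by (subst sum.atMost_shift) (simp add: lessThan_Suc_atMost)
    finally show ?thesis .
  qed
  also have "\<dots> \<le> (\<Sum>x\<in>TN N. nu x * (1 / qout S q x)) / nu i"
    unfolding d_def using qpos by (intro sum_a_bound) (auto simp: less_imp_le)
  also have "\<dots> = (\<Sum>x\<in>TN N. \<pi> x) / nu i"
  proof -
    have "nu x * (1 / qout S q x) = \<pi> x" if "x \<in> TN N" for x
    proof -
      have "x \<in> S" using that TN_S by blast
      then have "qout S q x \<noteq> 0" using qpos by (metis less_irrefl)
      then show ?thesis by (simp add: nu_def)
    qed
    then show ?thesis by simp
  qed
  also have "\<dots> \<le> infsum \<pi> S / nu i"
  proof -
    have "(\<Sum>x\<in>TN N. \<pi> x) \<le> infsum \<pi> S"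
      using sum_pi TN_fin TN_S pi_nn by (intro finite_sum_le_infsum) auto
    then show ?thesis using nu_pos[OF iS] by (simp add: divide_right_mono)
  qed
  finally have "(\<Sum>n<N. d (Suc n)) \<le> infsum \<pi> S / nu i" .
  moreover have "t 0 = 1 / qout S q i" by (simp add: t_def pp_nil w_def)
  ultimately show ?thesis using u_sum[of N] t_nn[of N] by linarith
qed

lemma time_summable: "(\<lambda>xs. pp xs * return_time S q i xs) summable_on first_return_paths S i"
proof (rule nonneg_bdd_above_summable_on)
  let ?f = "\<lambda>xs. pp xs * return_time S q i xs"
  have nn: "0 \<le> ?f xs" if "xs \<in> first_return_paths S i" for xs
  proof -
    have s: "set xs \<subseteq> S" using FRP_S that by blast
    then have "set (butlast xs) \<subseteq> S" by (meson in_set_butlastD subset_iff)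
    then show ?thesis using s pp_nn w_nn by (simp add: rt_w)
  qed
  then show "\<And>x. x \<in> first_return_paths S i \<Longrightarrow> 0 \<le> ?f x" .
  show "bdd_above (sum ?f ` {F. F \<subseteq> first_return_paths S i \<and> finite F})"
  proof (rule bdd_aboveI)
    fix v assume "v \<in> sum ?f ` {F. F \<subseteq> first_return_paths S i \<and> finite F}"
    then obtain F where F: "finite F" "F \<subseteq> first_return_paths S i" "v = sum ?f F" by blast
    obtain N where N: "{xs\<in>F. pp xs \<noteq> 0} \<subseteq> (\<Union>n<N. R n)" using FRP_cover[OF F(1,2)] by blast
    have "sum ?f F = sum ?f {xs\<in>F. pp xs \<noteq> 0}"
      using F by (intro sum.mono_neutral_right) auto
    also have "\<dots> \<le> sum ?f (\<Union>n<N. R n)"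
    proof (rule sum_mono2)
      show "finite (\<Union>n<N. R n)" using R_fin by auto
      show "{xs\<in>F. pp xs \<noteq> 0} \<subseteq> (\<Union>n<N. R n)" by (rule N)
      show "0 \<le> ?f b" if "b \<in> (\<Union>n<N. R n) - {xs\<in>F. pp xs \<noteq> 0}" for b
        using that R_FRP nn by blast
    qed
    also have "\<dots> = (\<Sum>n<N. u n)" unfolding sum_UR u_def ..
    also have "\<dots> \<le> 1 / qout S q i + infsum \<pi> S / nu i" by (rule u_bound)
    finally show "v \<le> 1 / qout S q i + infsum \<pi> S / nu i" using F by simp
  qed
qed

lemma pos_rec: "pos_recurrent S q i"
  unfolding pos_recurrent_def using return_prob time_summable by (simp add: pp_def)

end

lemma pos_recurrent_crit:
  assumes "\<And>x y. x \<in> S \<Longrightarrow> y \<in> S \<Longrightarrow> x \<noteq> y \<Longrightarrow> 0 \<le> q x y"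
    and "\<And>x. x \<in> S \<Longrightarrow> finite {y\<in>S. y \<noteq> x \<and> q x y \<noteq> 0}"
    and "\<And>x. x \<in> S \<Longrightarrow> 0 < qout S q x"
    and "\<And>x. x \<in> S \<Longrightarrow> 0 < \<pi> x"
    and "\<And>x y. x \<in> S \<Longrightarrow> y \<in> S \<Longrightarrow> \<pi> x * q x y = \<pi> y * q y x"
    and "(\<lambda>x. \<pi> x * qout S q x) summable_on S"
    and "\<pi> summable_on S"
  shows "\<forall>i\<in>S. pos_recurrent S q i"
proof
  fix i assume "i \<in> S"
  then interpret prc S q i \<pi> using assms by unfold_locales auto
  show "pos_recurrent S q i" by (rule pos_rec)
qed




definition nup :: "nat \<Rightarrow> state \<Rightarrow> state" where "nup i n = n(i := Suc (n i))"
definition nmv :: "nat \<Rightarrow> nat \<Rightarrow> state \<Rightarrow> state" where "nmv j i n = n(j := n j - 1, i := Suc (n i))"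
definition ndn :: "nat \<Rightarrow> state \<Rightarrow> state" where "ndn j n = n(j := n j - 1)"

lemma e1: "nup i n = nup i' n \<longleftrightarrow> i = i'"
proof
  assume "nup i n = nup i' n"
  from fun_cong[OF this, of i] show "i = i'" by (auto simp: nup_def split: if_splits)
qed simp

lemma e2: "0 < n j \<Longrightarrow> i' \<noteq> j \<Longrightarrow> nup i n \<noteq> nmv j i' n"
proof
  assume a: "0 < n j" "i' \<noteq> j" "nup i n = nmv j i' n"
  from fun_cong[OF a(3), of j] a(1,2) show False by (auto simp: nup_def nmv_def split: if_splits)
qed

lemma e3: "0 < n j \<Longrightarrow> nup i n \<noteq> ndn j n"
proof
  assume a: "0 < n j" "nup i n = ndn j n"
  from fun_cong[OF a(2), of j] a(1) show False by (auto simp: nup_def ndn_def split: if_splits)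
qed

lemma e4: "0 < n j \<Longrightarrow> 0 < n j' \<Longrightarrow> i \<noteq> j \<Longrightarrow> i' \<noteq> j' \<Longrightarrow> nmv j i n = nmv j' i' n \<longleftrightarrow> j = j' \<and> i = i'"
proof
  assume a: "0 < n j" "0 < n j'" "i \<noteq> j" "i' \<noteq> j'" "nmv j i n = nmv j' i' n"
  have "j = j'"
  proof (rule ccontr)
    assume "j \<noteq> j'"
    from fun_cong[OF a(5), of j] a this show False by (auto simp: nmv_def split: if_splits)
  qed
  moreover have "i = i'"
  proof (rule ccontr)
    assume "i \<noteq> i'"
    from fun_cong[OF a(5), of i] a this \<open>j = j'\<close> show False by (auto simp: nmv_def split: if_splits)
  qed
  ultimately show "j = j' \<and> i = i'" ..
qed simp

lemma e5: "0 < n j \<Longrightarrow> 0 < n j' \<Longrightarrow> i' \<noteq> j' \<Longrightarrow> nmv j' i' n \<noteq> ndn j n"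
proof
  assume a: "0 < n j" "0 < n j'" "i' \<noteq> j'" "nmv j' i' n = ndn j n"
  from fun_cong[OF a(4), of i'] a show False by (auto simp: nmv_def ndn_def split: if_splits)
qed

lemma e6: "0 < n j \<Longrightarrow> 0 < n j' \<Longrightarrow> ndn j n = ndn j' n \<longleftrightarrow> j = j'"
proof
  assume a: "0 < n j" "0 < n j'" "ndn j n = ndn j' n"
  show "j = j'"
  proof (rule ccontr)
    assume "j \<noteq> j'"
    from fun_cong[OF a(3), of j] a this show False by (auto simp: ndn_def split: if_splits)
  qed
qed simp

lemma jq_unfold: "jackson_q J a s rt n m =
     (\<Sum>i\<in>{1..J}. if m = nup i n then a * rt 0 i else 0) +
     (\<Sum>j\<in>{1..J}. if 0 < n j then
        (\<Sum>i\<in>{1..J} - {j}. if m = nmv j i n then s j (n j) * rt j i else 0)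
        + (if m = ndn j n then s j (n j) * rt j 0 else 0)
      else 0)"
  unfolding jackson_q_def nup_def nmv_def ndn_def ..

lemma J1: assumes "i \<in> {1..J}" shows "jackson_q J a s rt n (nup i n) = a * rt 0 i"
proof -
  have 1: "(\<Sum>i'\<in>{1..J}. if nup i n = nup i' n then a * rt 0 i' else 0) = a * rt 0 i"
    using assms by (simp add: e1 sum.delta)
  have 2: "(\<Sum>j\<in>{1..J}. if 0 < n j then
        (\<Sum>i'\<in>{1..J} - {j}. if nup i n = nmv j i' n then s j (n j) * rt j i' else 0)
        + (if nup i n = ndn j n then s j (n j) * rt j 0 else 0) else 0) = 0"
    by (intro sum.neutral ballI) (auto simp: e2 e3 intro!: sum.neutral)
  show ?thesis unfolding jq_unfold using 1 2 by simp
qed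

lemma J2: assumes "i \<in> {1..J}" "j \<in> {1..J}" "i \<noteq> j" "0 < n j"
  shows "jackson_q J a s rt n (nmv j i n) = s j (n j) * rt j i"
proof -
  have 1: "(\<Sum>i'\<in>{1..J}. if nmv j i n = nup i' n then a * rt 0 i' else 0) = 0"
    using assms e2 by (intro sum.neutral) metis
  have 2: "(\<Sum>j'\<in>{1..J}. if 0 < n j' then
        (\<Sum>i'\<in>{1..J} - {j'}. if nmv j i n = nmv j' i' n then s j' (n j') * rt j' i' else 0)
        + (if nmv j i n = ndn j' n then s j' (n j') * rt j' 0 else 0) else 0)
      = (\<Sum>j'\<in>{1..J}. if j' = j then s j (n j) * rt j i else 0)"
  proof (intro sum.cong refl)
    fix j' assume j': "j' \<in> {1..J}"
    show "(if 0 < n j' then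
        (\<Sum>i'\<in>{1..J} - {j'}. if nmv j i n = nmv j' i' n then s j' (n j') * rt j' i' else 0)
        + (if nmv j i n = ndn j' n then s j' (n j') * rt j' 0 else 0) else 0)
      = (if j' = j then s j (n j) * rt j i else 0)"
    proof (cases "0 < n j'")
      case True
      have a: "(\<Sum>i'\<in>{1..J} - {j'}. if nmv j i n = nmv j' i' n then s j' (n j') * rt j' i' else 0)
          = (\<Sum>i'\<in>{1..J} - {j'}. if j' = j \<and> i' = i then s j (n j) * rt j i else 0)"
        using True assms by (intro sum.cong refl) (auto simp: e4)
      also have "\<dots> = (if j' = j then s j (n j) * rt j i else 0)"
        using assms by (cases "j' = j") (auto simp: sum.delta')
      finally show ?thesis using True assms e5 by auto
    next
      case False then show ?thesis using assms by auto
    qed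
  qed
  show ?thesis unfolding jq_unfold 2 using 1 assms by (simp add: sum.delta')
qed

lemma J3: assumes "j \<in> {1..J}" "0 < n j"
  shows "jackson_q J a s rt n (ndn j n) = s j (n j) * rt j 0"
proof -
  have 1: "(\<Sum>i'\<in>{1..J}. if ndn j n = nup i' n then a * rt 0 i' else 0) = 0"
    using assms e3 by (intro sum.neutral) metis
  have 2: "(\<Sum>j'\<in>{1..J}. if 0 < n j' then
        (\<Sum>i'\<in>{1..J} - {j'}. if ndn j n = nmv j' i' n then s j' (n j') * rt j' i' else 0)
        + (if ndn j n = ndn j' n then s j' (n j') * rt j' 0 else 0) else 0)
      = (\<Sum>j'\<in>{1..J}. if j' = j then s j (n j) * rt j 0 else 0)"
  proof (intro sum.cong refl)
    fix j' assume j': "j' \<in> {1..J}"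
    show "(if 0 < n j' then
        (\<Sum>i'\<in>{1..J} - {j'}. if ndn j n = nmv j' i' n then s j' (n j') * rt j' i' else 0)
        + (if ndn j n = ndn j' n then s j' (n j') * rt j' 0 else 0) else 0)
      = (if j' = j then s j (n j) * rt j 0 else 0)"
    proof (cases "0 < n j'")
      case True
      have "(\<Sum>i'\<in>{1..J} - {j'}. if ndn j n = nmv j' i' n then s j' (n j') * rt j' i' else 0) = 0"
        using True assms e5 by (intro sum.neutral) (metis DiffD2 singletonI)
      then show ?thesis using True assms e6 by auto
    next
      case False then show ?thesis using assms by auto
    qed
  qed
  show ?thesis unfolding jq_unfold 2 using 1 assms by (simp add: sum.delta')
qed

lemma J0: assumes "jackson_q J a s rt n m \<noteq> 0"
  shows "(\<exists>i\<in>{1..J}. m = nup i n) \<or> (\<exists>j\<in>{1..J}. \<exists>i\<in>{1..J}. i \<noteq> j \<and> 0 < n j \<and> m = nmv j i n)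
     \<or> (\<exists>j\<in>{1..J}. 0 < n j \<and> m = ndn j n)"
proof (rule ccontr)
  assume c: "\<not> ?thesis"
  have 1: "(\<Sum>i\<in>{1..J}. if m = nup i n then a * rt 0 i else 0) = 0"
    using c by (intro sum.neutral) auto
  have 2: "(\<Sum>j\<in>{1..J}. if 0 < n j then
        (\<Sum>i\<in>{1..J} - {j}. if m = nmv j i n then s j (n j) * rt j i else 0)
        + (if m = ndn j n then s j (n j) * rt j 0 else 0)
      else 0) = 0"
  proof (rule sum.neutral, rule ballI)
    fix j assume j: "j \<in> {1..J}"
    show "(if 0 < n j then
        (\<Sum>i\<in>{1..J} - {j}. if m = nmv j i n then s j (n j) * rt j i else 0)
        + (if m = ndn j n then s j (n j) * rt j 0 else 0)
      else 0) = 0"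
    proof (cases "0 < n j")
      case True
      have "(\<Sum>i\<in>{1..J} - {j}. if m = nmv j i n then s j (n j) * rt j i else 0) = 0"
      proof (rule sum.neutral, rule ballI)
        fix i assume i: "i \<in> {1..J} - {j}"
        have "m \<noteq> nmv j i n" using c j True i by blast
        then show "(if m = nmv j i n then s j (n j) * rt j i else 0) = 0" by simp
      qed
      moreover have "m \<noteq> ndn j n"
      proof
        assume "m = ndn j n"
        then have "\<exists>j\<in>{1..J}. 0 < n j \<and> m = ndn j n" using j True by blast
        then show False using c by blast
      qed
      ultimately show ?thesis by simp
    qed simp
  qed
  have "jackson_q J a s rt n m = 0" unfolding jq_unfold 1 2 by simp
  then show False using assms by simp
qed

lemma jq_nn:
  assumes "0 \<le> a" "\<And>j k. j \<in> {1..J} \<Longrightarrow> 0 < k \<Longrightarrow> 0 \<le> s j k"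
    and "\<And>j i. j \<in> {0..J} \<Longrightarrow> i \<in> {0..J} \<Longrightarrow> i \<noteq> j \<Longrightarrow> 0 \<le> rt j i"
  shows "0 \<le> jackson_q J a s rt n m"
  unfolding jq_unfold
proof (intro add_nonneg_nonneg sum_nonneg)
  fix i assume i: "i \<in> {1..J}"
  show "0 \<le> (if m = nup i n then a * rt 0 i else 0)" using assms i by auto
next
  fix j assume j: "j \<in> {1..J}"
  show "0 \<le> (if 0 < n j then
        (\<Sum>i\<in>{1..J} - {j}. if m = nmv j i n then s j (n j) * rt j i else 0)
        + (if m = ndn j n then s j (n j) * rt j 0 else 0)
      else 0)"
  proof (cases "0 < n j")
    case True
    have "0 \<le> (\<Sum>i\<in>{1..J} - {j}. if m = nmv j i n then s j (n j) * rt j i else 0)"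
    proof (rule sum_nonneg)
      fix i assume i: "i \<in> {1..J} - {j}"
      have "0 \<le> s j (n j)" using assms(2) j True by blast
      moreover have "0 \<le> rt j i" using assms(3)[of j i] i j by auto
      ultimately show "0 \<le> (if m = nmv j i n then s j (n j) * rt j i else 0)" by simp
    qed
    moreover have "0 \<le> (if m = ndn j n then s j (n j) * rt j 0 else 0)"
    proof -
      have "0 \<le> s j (n j)" using assms(2) j True by blast
      moreover have "0 \<le> rt j 0" using assms(3)[of j 0] j by auto
      ultimately show ?thesis by simp
    qed
    ultimately show ?thesis using True by simp
  qed simp
qed

lemma jq_supp: "{m. jackson_q J a s rt n m \<noteq> 0} \<subseteq>
   (\<lambda>i. nup i n) ` {1..J} \<union> (\<lambda>(j, i). nmv j i n) ` ({1..J} \<times> {1..J}) \<union> (\<lambda>j. ndn j n) ` {1..J}"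
  using J0 by fastforce

lemma jq_supp_fin: "finite {m. jackson_q J a s rt n m \<noteq> 0}"
  by (rule finite_subset[OF jq_supp]) auto

lemma up_dn: "ndn i (nup i n) = n" by (auto simp: nup_def ndn_def)
lemma dn_up: "0 < n i \<Longrightarrow> nup i (ndn i n) = n" by (auto simp: nup_def ndn_def)
lemma mv_mv: "i \<noteq> j \<Longrightarrow> 0 < n j \<Longrightarrow> nmv i j (nmv j i n) = n"
  by (auto simp: nmv_def)
lemma up_S: "i \<in> I \<Longrightarrow> n \<in> states I \<Longrightarrow> nup i n \<in> states I" by (auto simp: nup_def states_def)
lemma dn_S: "n \<in> states I \<Longrightarrow> ndn i n \<in> states I" by (auto simp: ndn_def states_def)
lemma mv_S: "i \<in> I \<Longrightarrow> n \<in> states I \<Longrightarrow> nmv j i n \<in> states I" by (auto simp: nmv_def states_def)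




locale net =
  fixes J :: nat and \<Lambda> :: real and \<mu> :: "nat \<Rightarrow> nat \<Rightarrow> real" and r :: "nat \<Rightarrow> nat \<Rightarrow> real"
    and \<eta> :: "nat \<Rightarrow> real" and \<gamma> :: "nat \<Rightarrow> real"
  assumes lam_pos: "0 < \<Lambda>"
    and mu_pos: "\<forall>j\<in>{1..J}. \<forall>k\<ge>1. 0 < \<mu> j k"
    and r_nonneg: "\<forall>i\<in>{0..J}. \<forall>j\<in>{0..J}. 0 \<le> r i j"
    and r_stoch: "\<forall>i\<in>{0..J}. (\<Sum>j\<in>{0..J}. r i j) = 1"
    and r_irred: "\<forall>i\<in>{0..J}. \<forall>j\<in>{0..J}.
                    (i, j) \<in> {(a, b). a \<in> {0..J} \<and> b \<in> {0..J} \<and> 0 < r a b}\<^sup>*"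
    and r_00: "r 0 0 = 0"
    and eta_0: "\<eta> 0 = \<Lambda>"
    and reversible: "\<forall>i\<in>{0..J}. \<forall>j\<in>{0..J}. \<eta> i * r i j = \<eta> j * r j i"
    and C_finite: "\<forall>j\<in>{1..J}. summable (\<lambda>n. \<Prod>k\<in>{1..n}. \<eta> j / \<mu> j k)"
    and gamma_nonneg: "\<forall>j\<in>{1..J}. 0 \<le> \<gamma> j"
begin

abbreviation "S \<equiv> states {1..J}"
abbreviation "B \<equiv> blocked J \<gamma>"
abbreviation "W \<equiv> working J \<gamma>"
abbreviation "\<beta> \<equiv> beta J \<gamma>"
abbreviation "\<alpha> \<equiv> alpha J \<gamma>"
abbreviation "Q \<equiv> q_gamma J \<Lambda> \<mu> r \<gamma>"
abbreviation "rt \<equiv> r_alpha J r \<alpha>"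

definition pw :: "(state \<Rightarrow> real) \<Rightarrow> state \<Rightarrow> real" where
  "pw \<psi> n = (\<Prod>j\<in>W. marg \<eta> \<mu> j (n j)) * \<psi> (restrict_state B n)"

lemma mu_pos': "j \<in> {1..J} \<Longrightarrow> 0 < k \<Longrightarrow> 0 < \<mu> j k" using mu_pos by auto

lemma J_pos: "1 \<le> J"
proof (rule ccontr)
  assume "\<not> 1 \<le> J" then have "J = 0" by simp
  then show False using r_stoch r_00 by auto
qed

lemma gnorm_ge: "j \<in> {1..J} \<Longrightarrow> \<gamma> j \<le> gnorm J \<gamma>"
  unfolding gnorm_def by (rule Max_ge) auto

lemma beta_ge1: "1 \<le> \<beta>" by (simp add: beta_def)
lemma beta_pos: "0 < \<beta>" using beta_ge1 by linarith

lemma alpha0: "\<alpha> 0 = 1" by (simp add: alpha_def)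
lemma alpha_j: "j \<in> {1..J} \<Longrightarrow> \<alpha> j = \<gamma> j / \<beta>"
  by (auto simp: alpha_def beta_def)
lemma alpha_nn: "j \<in> {0..J} \<Longrightarrow> 0 \<le> \<alpha> j"
proof -
  assume j: "j \<in> {0..J}"
  show ?thesis
  proof (cases "j = 0")
    case True then show ?thesis by (simp add: alpha0)
  next
    case False then have "j \<in> {1..J}" using j by auto
    then show ?thesis using gamma_nonneg beta_pos by (simp add: alpha_j)
  qed
qed
lemma alpha_le1: "j \<in> {0..J} \<Longrightarrow> \<alpha> j \<le> 1"
proof -
  assume j: "j \<in> {0..J}"
  show ?thesis
  proof (cases "j = 0")
    case True then show ?thesis by (simp add: alpha0)
  next
    case False then have jj: "j \<in> {1..J}" using j by auto
    have "\<gamma> j \<le> \<beta>" using gnorm_ge[OF jj] by (simp add: beta_def)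
    then show ?thesis using beta_pos by (simp add: alpha_j[OF jj])
  qed
qed
lemma beta_alpha: "j \<in> {1..J} \<Longrightarrow> \<beta> * \<alpha> j = \<gamma> j"
  using beta_pos by (simp add: alpha_j)

lemma rt_off: "i \<noteq> j \<Longrightarrow> rt j i = r j i * \<alpha> i"
  by (simp add: r_alpha_def)

lemma r_le1: "i \<in> {0..J} \<Longrightarrow> j \<in> {0..J} \<Longrightarrow> r i j \<le> 1"
proof -
  assume i: "i \<in> {0..J}" and j: "j \<in> {0..J}"
  have "r i j \<le> (\<Sum>k\<in>{0..J}. r i k)"
    using i j r_nonneg by (intro member_le_sum) auto
  then show ?thesis using r_stoch i by simp
qed

lemma Q_def': "Q = jackson_q J (\<beta> * \<Lambda>) (\<lambda>j k. \<gamma> j * \<mu> j k) rt"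
  by (simp add: q_gamma_def)

lemma Q_up: "i \<in> {1..J} \<Longrightarrow> Q n (nup i n) = \<Lambda> * r 0 i * \<gamma> i"
proof -
  assume i: "i \<in> {1..J}"
  have "Q n (nup i n) = \<beta> * \<Lambda> * rt 0 i" unfolding Q_def' using J1[OF i] .
  also have "\<dots> = \<Lambda> * r 0 i * (\<beta> * \<alpha> i)" using i by (simp add: rt_off)
  also have "\<dots> = \<Lambda> * r 0 i * \<gamma> i" using beta_alpha[OF i] by simp
  finally show ?thesis .
qed

lemma Q_mv: "i \<in> {1..J} \<Longrightarrow> j \<in> {1..J} \<Longrightarrow> i \<noteq> j \<Longrightarrow> 0 < n j \<Longrightarrow>
    Q n (nmv j i n) = \<gamma> j * \<mu> j (n j) * r j i * \<alpha> i"
  unfolding Q_def' by (subst J2) (auto simp: rt_off)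

lemma Q_dn: "j \<in> {1..J} \<Longrightarrow> 0 < n j \<Longrightarrow> Q n (ndn j n) = \<gamma> j * \<mu> j (n j) * r j 0"
  unfolding Q_def' by (subst J3) (auto simp: rt_off alpha0)

lemma eta_pos: "j \<in> {0..J} \<Longrightarrow> 0 < \<eta> j"
proof -
  assume j: "j \<in> {0..J}"
  have "(0, j) \<in> {(a, b). a \<in> {0..J} \<and> b \<in> {0..J} \<and> 0 < r a b}\<^sup>*" using r_irred j by auto
  then show ?thesis
  proof (induction rule: rtrancl_induct)
    case base then show ?case using eta_0 lam_pos by simp
  next
    case (step a b)
    then have ab: "a \<in> {0..J}" "b \<in> {0..J}" "0 < r a b" by auto
    have "0 < \<eta> a * r a b" using step.IH ab by simp
    then have p: "0 < \<eta> b * r b a" using reversible ab by metis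
    have "0 \<le> r b a" using r_nonneg ab by auto
    show ?case
    proof (rule ccontr)
      assume "\<not> 0 < \<eta> b"
      then have "\<eta> b * r b a \<le> 0" using \<open>0 \<le> r b a\<close> by (simp add: mult_nonpos_nonneg)
      then show False using p by simp
    qed
  qed
qed

lemma prodterm_pos: "j \<in> {1..J} \<Longrightarrow> 0 < (\<Prod>k\<in>{1..m}. \<eta> j / \<mu> j k)"
  using eta_pos[of j] mu_pos' by (intro prod_pos) auto

lemma normC_pos: "j \<in> {1..J} \<Longrightarrow> 0 < normC \<eta> \<mu> j"
  unfolding normC_def using C_finite prodterm_pos by (intro suminf_pos) auto

lemma marg_pos: "j \<in> {1..J} \<Longrightarrow> 0 < marg \<eta> \<mu> j m"
  unfolding marg_def using normC_pos prodterm_pos by simp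

lemma marg_Suc: "marg \<eta> \<mu> j (Suc m) = marg \<eta> \<mu> j m * (\<eta> j / \<mu> j (Suc m))"
  by (simp add: marg_def)

lemma marg_has_sum: "j \<in> {1..J} \<Longrightarrow> (marg \<eta> \<mu> j has_sum 1) UNIV"
proof -
  assume j: "j \<in> {1..J}"
  have "(\<lambda>n. \<Prod>k\<in>{1..n}. \<eta> j / \<mu> j k) sums normC \<eta> \<mu> j"
    unfolding normC_def using C_finite j by (simp add: summable_sums)
  then have "((\<lambda>n. \<Prod>k\<in>{1..n}. \<eta> j / \<mu> j k) has_sum normC \<eta> \<mu> j) UNIV"
    using prodterm_pos[OF j] by (intro sums_nonneg_imp_has_sum) (auto intro: less_imp_le)
  then have "((\<lambda>n. (1 / normC \<eta> \<mu> j) * (\<Prod>k\<in>{1..n}. \<eta> j / \<mu> j k)) has_sum (1 / normC \<eta> \<mu> j) * normC \<eta> \<mu> j) UNIV"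
    by (rule has_sum_cmult_right)
  moreover have "(1 / normC \<eta> \<mu> j) * normC \<eta> \<mu> j = 1" using normC_pos[OF j] by simp
  ultimately show ?thesis by (simp add: marg_def[abs_def])
qed

lemma B_sub: "B \<subseteq> {1..J}" by (auto simp: blocked_def)
lemma W_sub: "W \<subseteq> {1..J}" by (auto simp: working_def)
lemma WB_disj: "W \<inter> B = {}" by (auto simp: working_def)
lemma WB_un: "W \<union> B = {1..J}" by (auto simp: working_def blocked_def)
lemma inB: "j \<in> {1..J} \<Longrightarrow> j \<in> B \<longleftrightarrow> \<gamma> j = 0" by (simp add: blocked_def)
lemma inW: "j \<in> {1..J} \<Longrightarrow> j \<in> W \<longleftrightarrow> \<gamma> j \<noteq> 0" by (simp add: working_def blocked_def)
lemma W_fin: "finite W" using W_sub finite_subset by blast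
lemma marg_nnW: "j \<in> W \<Longrightarrow> 0 \<le> marg \<eta> \<mu> j m" using W_sub marg_pos by (meson less_imp_le subsetD)

lemma pw_up: assumes "i \<in> W" shows "pw \<psi> (nup i n) = pw \<psi> n * (\<eta> i / \<mu> i (Suc (n i)))"
proof -
  have iB: "i \<notin> B" using assms WB_disj by blast
  have rs: "restrict_state B (nup i n) = restrict_state B n"
    using iB by (auto simp: restrict_state_def nup_def)
  have "(\<Prod>j\<in>W. marg \<eta> \<mu> j (nup i n j)) = marg \<eta> \<mu> i (Suc (n i)) * (\<Prod>j\<in>W - {i}. marg \<eta> \<mu> j (nup i n j))"
    using assms W_fin by (simp add: prod.remove nup_def)
  also have "(\<Prod>j\<in>W - {i}. marg \<eta> \<mu> j (nup i n j)) = (\<Prod>j\<in>W - {i}. marg \<eta> \<mu> j (n j))"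
    by (intro prod.cong) (auto simp: nup_def)
  also have "marg \<eta> \<mu> i (Suc (n i)) = marg \<eta> \<mu> i (n i) * (\<eta> i / \<mu> i (Suc (n i)))" by (rule marg_Suc)
  finally have "(\<Prod>j\<in>W. marg \<eta> \<mu> j (nup i n j)) = (\<Prod>j\<in>W. marg \<eta> \<mu> j (n j)) * (\<eta> i / \<mu> i (Suc (n i)))"
    using assms W_fin by (simp add: prod.remove mult_ac)
  then show ?thesis unfolding pw_def rs by (simp add: mult_ac)
qed

lemma Arr: assumes i: "i \<in> {1..J}"
  shows "pw \<psi> n * Q n (nup i n) = pw \<psi> (nup i n) * Q (nup i n) n"
proof -
  have m: "0 < nup i n i" by (simp add: nup_def)
  have bk: "Q (nup i n) n = \<gamma> i * \<mu> i (Suc (n i)) * r i 0"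
    using Q_dn[of i "nup i n", OF i m] up_dn[of i n] by (simp add: nup_def)
  show ?thesis
  proof (cases "\<gamma> i = 0")
    case True then show ?thesis using bk Q_up[OF i] by simp
  next
    case False
    then have iW: "i \<in> W" using inW i by blast
    have mu: "\<mu> i (Suc (n i)) \<noteq> 0" using mu_pos'[OF i, of "Suc (n i)"] by simp
    have rev: "\<Lambda> * r 0 i = \<eta> i * r i 0" using reversible i eta_0 by force
    have "pw \<psi> (nup i n) * Q (nup i n) n = pw \<psi> n * (\<eta> i / \<mu> i (Suc (n i))) * (\<gamma> i * \<mu> i (Suc (n i)) * r i 0)"
      using pw_up[OF iW] bk by simp
    also have "\<dots> = pw \<psi> n * (\<eta> i * r i 0) * \<gamma> i" using mu by (simp add: field_simps)
    also have "\<dots> = pw \<psi> n * Q n (nup i n)" using Q_up[OF i] rev by (simp add: mult_ac)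
    finally show ?thesis ..
  qed
qed

lemma nmv_alt: "i \<noteq> j \<Longrightarrow> nmv j i n = nup i (ndn j n)"
  by (auto simp: nmv_def nup_def ndn_def fun_eq_iff)

lemma Mv: assumes i: "i \<in> {1..J}" and j: "j \<in> {1..J}" and ij: "i \<noteq> j" and nj: "0 < n j"
  shows "pw \<psi> n * Q n (nmv j i n) = pw \<psi> (nmv j i n) * Q (nmv j i n) n"
proof -
  let ?m = "nmv j i n"
  have mi: "0 < ?m i" and mi': "?m i = Suc (n i)" using ij by (auto simp: nmv_def)
  have bk: "Q ?m n = \<gamma> i * \<mu> i (Suc (n i)) * r i j * \<alpha> j"
    using Q_mv[of j i ?m, OF j i ij[symmetric] mi] mv_mv[of i j n, OF ij nj] mi' by simp
  have fwd: "Q n ?m = \<gamma> j * \<mu> j (n j) * r j i * \<alpha> i" using Q_mv[of i j n, OF i j ij nj] .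
  show ?thesis
  proof (cases "\<gamma> i = 0 \<or> \<gamma> j = 0")
    case True
    then show ?thesis using bk fwd alpha_j[OF i] alpha_j[OF j] by auto
  next
    case False
    then have iW: "i \<in> W" and jW: "j \<in> W" using inW i j by blast+
    define n' where "n' = ndn j n"
    have n_eq: "n = nup j n'" unfolding n'_def using dn_up[of n j, OF nj] by simp
    have m_eq: "?m = nup i n'" unfolding n'_def using nmv_alt[OF ij] by simp
    have n'j: "Suc (n' j) = n j" using nj by (simp add: n'_def ndn_def)
    have n'i: "n' i = n i" using ij by (simp add: n'_def ndn_def)
    have pn: "pw \<psi> n = pw \<psi> n' * (\<eta> j / \<mu> j (n j))"
      using pw_up[OF jW, of \<psi> n'] n_eq n'j by simp
    have pm: "pw \<psi> ?m = pw \<psi> n' * (\<eta> i / \<mu> i (Suc (n i)))"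
      using pw_up[OF iW, of \<psi> n'] m_eq n'i by simp
    have mui: "\<mu> i (Suc (n i)) \<noteq> 0" using mu_pos'[OF i, of "Suc (n i)"] by simp
    have muj: "\<mu> j (n j) \<noteq> 0" using mu_pos'[OF j, of "n j"] nj by simp
    have rev: "\<eta> j * r j i = \<eta> i * r i j" using reversible i j by force
    have "pw \<psi> n * Q n ?m = pw \<psi> n' * (\<eta> j * r j i) * (\<gamma> j * \<gamma> i / \<beta>)"
      using pn fwd muj alpha_j[OF i] by (simp add: field_simps)
    also have "\<dots> = pw \<psi> n' * (\<eta> i * r i j) * (\<gamma> i * \<gamma> j / \<beta>)" using rev by (simp add: mult_ac)
    also have "\<dots> = pw \<psi> ?m * Q ?m n"
      using pm bk mui alpha_j[OF j] by (simp add: field_simps)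
    finally show ?thesis .
  qed
qed

lemma DB1: assumes "Q y x \<noteq> 0" shows "pw \<psi> x * Q x y = pw \<psi> y * Q y x"
proof -
  have "(\<exists>i\<in>{1..J}. x = nup i y) \<or> (\<exists>j\<in>{1..J}. \<exists>i\<in>{1..J}. i \<noteq> j \<and> 0 < y j \<and> x = nmv j i y)
     \<or> (\<exists>j\<in>{1..J}. 0 < y j \<and> x = ndn j y)"
    using J0[of J "\<beta> * \<Lambda>" "\<lambda>j k. \<gamma> j * \<mu> j k" rt y x] assms by (simp add: Q_def')
  then show ?thesis
  proof (elim disjE bexE conjE)
    fix i assume "i \<in> {1..J}" "x = nup i y"
    then show ?thesis using Arr[of i \<psi> y] by simp
  next
    fix j i assume "j \<in> {1..J}" "i \<in> {1..J}" "i \<noteq> j" "0 < y j" "x = nmv j i y"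
    then show ?thesis using Mv[of i j y \<psi>] by simp
  next
    fix j assume j: "j \<in> {1..J}" "0 < y j" "x = ndn j y"
    then have "y = nup j x" using dn_up by simp
    then show ?thesis using Arr[OF j(1), of \<psi> x] by simp
  qed
qed

lemma DB: "pw \<psi> x * Q x y = pw \<psi> y * Q y x"
proof (cases "Q y x \<noteq> 0")
  case True then show ?thesis by (rule DB1)
next
  case False
  show ?thesis
  proof (cases "Q x y \<noteq> 0")
    case True then show ?thesis using DB1[OF True, of \<psi>] by simp
  next
    case False2: False
    then show ?thesis using False by simp
  qed
qed

lemma stationary_from_db:
  fixes q :: "'b \<Rightarrow> 'b \<Rightarrow> real"
  assumes pd: "prob_dist SS p"
    and fs: "\<And>x. finite {y. q x y \<noteq> 0}"
    and db: "\<And>x y. p x * q x y = p y * q y x"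
  shows "stationary_dist SS q p"
  unfolding stationary_dist_def
proof (intro conjI pd ballI)
  fix x assume x: "x \<in> SS"
  let ?T = "{y \<in> SS - {x}. q x y \<noteq> 0}"
  have fT: "finite ?T" using fs[of x] by (rule rev_finite_subset) auto
  have h1: "(q x has_sum sum (q x) ?T) ?T" using fT by (rule has_sum_finite)
  have h2: "(q x has_sum sum (q x) ?T) (SS - {x})"
    using h1 by (subst has_sum_cong_neutral[where T="?T" and g="q x"]) auto
  then have qo: "qout SS q x = sum (q x) ?T" unfolding qout_def by (rule infsumI)
  have "((\<lambda>y. p x * q x y) has_sum (p x * qout SS q x)) (SS - {x})"
    unfolding qo by (rule has_sum_cmult_right[OF h2])
  then show "((\<lambda>y. p y * q y x) has_sum (p x * qout SS q x)) (SS - {x})"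
    using db by (simp add: mult.commute)
qed

lemma restrict_B_S: "restrict_state B n \<in> states B"
  by (simp add: restrict_state_def states_def)

lemma pw_prob:
  assumes psi_nn: "\<And>b. b \<in> states B \<Longrightarrow> 0 \<le> \<psi> b" and psi_sum: "(\<psi> has_sum 1) (states B)"
  shows "prob_dist S (pw \<psi>)"
proof -
  let ?h = "\<lambda>(m::state, b::state). (\<lambda>j. m j + b j)"
  have img: "?h ` (states W \<times> states B) = S"
  proof
    show "?h ` (states W \<times> states B) \<subseteq> S"
      using W_sub B_sub by (auto simp: states_def)
    show "S \<subseteq> ?h ` (states W \<times> states B)"
    proof
      fix n assume n: "n \<in> S"
      have "n = ?h (restrict_state W n, restrict_state B n)"
      proof -
        have "n j = restrict_state W n j + restrict_state B n j" for j
          using n WB_disj WB_un by (auto simp: restrict_state_def states_def)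
        then show ?thesis by auto
      qed
      moreover have "restrict_state W n \<in> states W" by (simp add: restrict_state_def states_def)
      ultimately show "n \<in> ?h ` (states W \<times> states B)" using restrict_B_S by blast
    qed
  qed
  have inj: "inj_on ?h (states W \<times> states B)"
  proof (rule inj_onI, clarify)
    fix m b m' b' assume s: "m \<in> states W" "b \<in> states B" "m' \<in> states W" "b' \<in> states B"
      and e: "(\<lambda>j. m j + b j) = (\<lambda>j. m' j + b' j)"
    have "m j = m' j \<and> b j = b' j" for j
      using fun_cong[OF e, of j] s WB_disj by (cases "j \<in> W"; cases "j \<in> B") (auto simp: states_def)
    then show "m = m' \<and> b = b'" by auto
  qed
  have val: "(pw \<psi> \<circ> ?h) x = (\<lambda>(m, b). (\<Prod>j\<in>W. marg \<eta> \<mu> j (m j)) * \<psi> b) x"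
    if xin: "x \<in> states W \<times> states B" for x
  proof -
    obtain m b where x: "x = (m, b)" "m \<in> states W" "b \<in> states B" using xin by (meson SigmaE)
    have 1: "(\<Prod>j\<in>W. marg \<eta> \<mu> j (m j + b j)) = (\<Prod>j\<in>W. marg \<eta> \<mu> j (m j))"
      using x WB_disj by (intro prod.cong refl) (auto simp: states_def)
    have 2: "restrict_state B (\<lambda>j. m j + b j) = b"
    proof
      fix j show "restrict_state B (\<lambda>j. m j + b j) j = b j"
        using x WB_disj by (cases "j \<in> B") (auto simp: restrict_state_def states_def)
    qed
    show ?thesis using 1 2 x by (simp add: pw_def)
  qed
  have pm: "((\<lambda>m. \<Prod>j\<in>W. marg \<eta> \<mu> j (m j)) has_sum (\<Prod>j\<in>W. 1)) (states W)"
    using W_fin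
  proof (rule has_sum_prod_states)
    show "(marg \<eta> \<mu> j has_sum 1) UNIV" if "j \<in> W" for j using that W_sub marg_has_sum by blast
    show "0 \<le> marg \<eta> \<mu> j k" if "j \<in> W" for j k using that W_sub marg_pos by (meson less_imp_le subsetD)
  qed
  have P: "((\<lambda>(m, b). (\<Prod>j\<in>W. marg \<eta> \<mu> j (m j)) * \<psi> b) has_sum (1 * 1)) (states W \<times> states B)"
  proof (rule has_sum_product_nonneg)
    show "((\<lambda>m. \<Prod>j\<in>W. marg \<eta> \<mu> j (m j)) has_sum 1) (states W)" using pm by simp
    show "(\<psi> has_sum 1) (states B)" by (rule psi_sum)
    show "0 \<le> (\<Prod>j\<in>W. marg \<eta> \<mu> j (m j))" for m
      by (intro prod_nonneg) (auto intro: marg_nnW)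
    show "0 \<le> \<psi> b" if "b \<in> states B" for b using psi_nn that .
  qed
  have H: "((pw \<psi> \<circ> ?h) has_sum 1) (states W \<times> states B)"
    using has_sum_cong[THEN iffD2, OF val P] by (simp add: comp_def)
  have "(pw \<psi> has_sum 1) (?h ` (states W \<times> states B))"
    unfolding has_sum_reindex[OF inj] by (rule H)
  then have "(pw \<psi> has_sum 1) S" unfolding img .
  moreover have "0 \<le> pw \<psi> n" if "n \<in> S" for n
    unfolding pw_def using psi_nn restrict_B_S
    by (intro mult_nonneg_nonneg prod_nonneg) (auto intro: marg_nnW)
  ultimately show ?thesis by (simp add: prob_dist_def)
qed

lemma Q_fin: "finite {y. Q x y \<noteq> 0}"
  unfolding Q_def' by (rule jq_supp_fin)

lemma pw_stationary:
  assumes "\<And>b. b \<in> states B \<Longrightarrow> 0 \<le> \<psi> b" "(\<psi> has_sum 1) (states B)"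
  shows "stationary_dist S Q (pw \<psi>)"
  using pw_prob[OF assms] Q_fin DB by (rule stationary_from_db)

definition psi0 :: "state \<Rightarrow> real" where "psi0 b = (\<Prod>j\<in>B. marg \<eta> \<mu> j (b j))"

lemma B_fin: "finite B" using B_sub finite_subset by blast

lemma psi0_props: "\<And>b. 0 \<le> psi0 b" "(psi0 has_sum 1) (states B)"
proof -
  show "0 \<le> psi0 b" for b unfolding psi0_def
  proof (rule prod_nonneg)
    show "0 \<le> marg \<eta> \<mu> j (b j)" if "j \<in> B" for j using that B_sub marg_pos by (meson less_imp_le subsetD)
  qed
  have "(psi0 has_sum (\<Prod>j\<in>B. 1)) (states B)"
    unfolding psi0_def[abs_def] using B_fin
  proof (rule has_sum_prod_states)
    show "(marg \<eta> \<mu> j has_sum 1) UNIV" if "j \<in> B" for j using that B_sub marg_has_sum by blast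
    show "0 \<le> marg \<eta> \<mu> j k" if "j \<in> B" for j k using that B_sub marg_pos by (meson less_imp_le subsetD)
  qed
  then show "(psi0 has_sum 1) (states B)" by simp
qed

lemma xi_pw: "xi J \<eta> \<mu> = pw psi0"
proof
  fix n
  have "xi J \<eta> \<mu> n = (\<Prod>j\<in>W \<union> B. marg \<eta> \<mu> j (n j))" by (simp add: xi_def WB_un)
  also have "\<dots> = (\<Prod>j\<in>W. marg \<eta> \<mu> j (n j)) * (\<Prod>j\<in>B. marg \<eta> \<mu> j (n j))"
    using W_fin B_fin WB_disj by (rule prod.union_disjoint)
  also have "(\<Prod>j\<in>B. marg \<eta> \<mu> j (n j)) = psi0 (restrict_state B n)"
    unfolding psi0_def by (intro prod.cong) (auto simp: restrict_state_def)
  finally show "xi J \<eta> \<mu> n = pw psi0 n" by (simp add: pw_def)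
qed

lemma xi_stationary: "stationary_dist S Q (xi J \<eta> \<mu>)"
  unfolding xi_pw using psi0_props by (intro pw_stationary) auto

lemma xi_phi_stationary: "prob_dist (states B) \<phi> \<Longrightarrow> stationary_dist S Q (xi_phi J \<eta> \<mu> \<gamma> \<phi>)"
proof -
  assume "prob_dist (states B) \<phi>"
  then have "stationary_dist S Q (pw \<phi>)" by (intro pw_stationary) (auto simp: prob_dist_def)
  moreover have "xi_phi J \<eta> \<mu> \<gamma> \<phi> = pw \<phi>" by (simp add: fun_eq_iff xi_phi_def pw_def)
  ultimately show ?thesis by simp
qed

lemma Q_inv: assumes "Q x y \<noteq> 0" "j \<in> B" shows "y j = x j"
proof -
  have j: "j \<in> {1..J}" "\<gamma> j = 0" using assms(2) by (auto simp: blocked_def)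
  have "(\<exists>i\<in>{1..J}. y = nup i x) \<or> (\<exists>k\<in>{1..J}. \<exists>i\<in>{1..J}. i \<noteq> k \<and> 0 < x k \<and> y = nmv k i x)
     \<or> (\<exists>k\<in>{1..J}. 0 < x k \<and> y = ndn k x)"
    using J0[of J "\<beta> * \<Lambda>" "\<lambda>j k. \<gamma> j * \<mu> j k" rt x y] assms(1) by (simp add: Q_def')
  then show ?thesis
  proof (elim disjE bexE conjE)
    fix i assume i: "i \<in> {1..J}" "y = nup i x"
    then have "\<gamma> i \<noteq> 0" using assms(1) Q_up[OF i(1)] by auto
    then have "i \<noteq> j" using j by auto
    then show ?thesis using i by (simp add: nup_def)
  next
    fix k i assume ki: "k \<in> {1..J}" "i \<in> {1..J}" "i \<noteq> k" "0 < x k" "y = nmv k i x"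
    then have "\<gamma> k \<noteq> 0 \<and> \<alpha> i \<noteq> 0" using assms(1) Q_mv[of i k x] by auto
    then have "\<gamma> k \<noteq> 0 \<and> \<gamma> i \<noteq> 0" using alpha_j[OF ki(2)] by auto
    then have "k \<noteq> j" "i \<noteq> j" using j by auto
    then show ?thesis using ki by (simp add: nmv_def)
  next
    fix k assume k: "k \<in> {1..J}" "0 < x k" "y = ndn k x"
    then have "\<gamma> k \<noteq> 0" using assms(1) Q_dn[of k x] by auto
    then have "k \<noteq> j" using j by auto
    then show ?thesis using k by (simp add: ndn_def)
  qed
qed

lemma fiber_closed: "b \<in> states B \<Longrightarrow> closed_subspace S Q (fiber J \<gamma> b)"
  unfolding closed_subspace_def
proof (intro conjI ballI)
  show "fiber J \<gamma> b \<subseteq> S" by (auto simp: fiber_def)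
  fix x y assume x: "x \<in> fiber J \<gamma> b" and y: "y \<in> S - fiber J \<gamma> b"
  show "Q x y = 0"
  proof (rule ccontr)
    assume "Q x y \<noteq> 0"
    then have "\<forall>j\<in>B. y j = x j" using Q_inv by blast
    then have "y \<in> fiber J \<gamma> b" using x y by (auto simp: fiber_def)
    then show False using y by blast
  qed
qed

lemma fiber_union: "(\<Union>b\<in>states B. fiber J \<gamma> b) = S"
proof
  show "(\<Union>b\<in>states B. fiber J \<gamma> b) \<subseteq> S" by (auto simp: fiber_def)
  show "S \<subseteq> (\<Union>b\<in>states B. fiber J \<gamma> b)"
  proof
    fix n assume "n \<in> S"
    then have "n \<in> fiber J \<gamma> (restrict_state B n)" by (auto simp: fiber_def restrict_state_def)
    then show "n \<in> (\<Union>b\<in>states B. fiber J \<gamma> b)" using restrict_B_S by blast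
  qed
qed

lemma fiber_self: "b \<in> states B \<Longrightarrow> b \<in> fiber J \<gamma> b"
  using B_sub by (auto simp: fiber_def states_def)

lemma fiber_inj: "inj_on (fiber J \<gamma>) (states B)"
proof (rule inj_onI)
  fix b b' assume b: "b \<in> states B" "b' \<in> states B" and e: "fiber J \<gamma> b = fiber J \<gamma> b'"
  have "b \<in> fiber J \<gamma> b'" using fiber_self[OF b(1)] e by simp
  then have "\<forall>j\<in>B. b j = b' j" by (simp add: fiber_def)
  then show "b = b'" using b by (auto simp: states_def fun_eq_iff)
qed

lemma fiber_infinite: "B \<noteq> {} \<Longrightarrow> infinite (fiber J \<gamma> ` states B)"
proof
  assume "B \<noteq> {}" and fin: "finite (fiber J \<gamma> ` states B)"
  then obtain j where j: "j \<in> B" by blast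
  have "finite (states B)" using finite_imageD[OF fin fiber_inj] .
  moreover have "(\<lambda>k. (\<lambda>_. 0::nat)(j := k)) ` UNIV \<subseteq> states B" using j by (auto simp: states_def)
  moreover have "inj (\<lambda>k. (\<lambda>_. 0::nat)(j := k))" by (rule injI) (metis fun_upd_same)
  ultimately have "finite (UNIV :: nat set)" by (meson finite_imageD finite_subset)
  then show False by simp
qed

lemma not_irred: "B \<noteq> {} \<Longrightarrow> \<not> irreducible_chain S Q"
proof
  assume "B \<noteq> {}" and irr: "irreducible_chain S Q"
  then obtain j where j: "j \<in> B" by blast
  have jJ: "j \<in> {1..J}" using j B_sub by blast
  let ?z = "\<lambda>_::nat. 0::nat"
  have zS: "?z \<in> S" by (simp add: states_def)
  have uS: "nup j ?z \<in> S" using jJ by (intro up_S zS)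
  have "(?z, nup j ?z) \<in> (trans_rel S Q)\<^sup>*" using irr zS uS by (simp add: irreducible_chain_def)
  moreover have "\<And>x y. (x, y) \<in> (trans_rel S Q)\<^sup>* \<Longrightarrow> y j = x j"
  proof -
    fix x y assume "(x, y) \<in> (trans_rel S Q)\<^sup>*"
    then show "y j = x j"
    proof (induction rule: rtrancl_induct)
      case (step y z)
      then have "Q y z \<noteq> 0" by (auto simp: trans_rel_def)
      then show ?case using Q_inv[OF _ j] step.IH by metis
    qed simp
  qed
  ultimately have "nup j ?z j = ?z j" by blast
  then show False by (simp add: nup_def)
qed

end



lemma qout_finsupp:
  assumes "finite {y. q x y \<noteq> 0}"
  shows "qout SS q x = sum (q x) {y \<in> SS - {x}. q x y \<noteq> (0::real)}"
proof -
  let ?T = "{y \<in> SS - {x}. q x y \<noteq> 0}"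
  have fT: "finite ?T" using assms by (rule rev_finite_subset) auto
  have h1: "(q x has_sum sum (q x) ?T) ?T" using fT by (rule has_sum_finite)
  have h2: "(q x has_sum sum (q x) ?T) (SS - {x})"
    using h1 by (subst has_sum_cong_neutral[where T="?T" and g="q x"]) auto
  then show ?thesis unfolding qout_def by (rule infsumI)
qed

context net
begin

lemma rt_bounds: "i \<in> {0..J} \<Longrightarrow> j \<in> {0..J} \<Longrightarrow> i \<noteq> j \<Longrightarrow> 0 \<le> rt j i \<and> rt j i \<le> 1"
proof -
  assume i: "i \<in> {0..J}" and j: "j \<in> {0..J}" and ij: "i \<noteq> j"
  have "0 \<le> r j i" "r j i \<le> 1" using r_nonneg r_le1 i j by auto
  moreover have "0 \<le> \<alpha> i" "\<alpha> i \<le> 1" using alpha_nn alpha_le1 i by auto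
  ultimately show ?thesis using ij by (simp add: rt_off mult_le_one)
qed

lemma Q_nn: "0 \<le> Q x y"
  unfolding Q_def'
proof (rule jq_nn)
  show "0 \<le> \<beta> * \<Lambda>" using beta_pos lam_pos by simp
  show "0 \<le> \<gamma> j * \<mu> j k" if "j \<in> {1..J}" "0 < k" for j k
    using that gamma_nonneg mu_pos' by (simp add: less_imp_le)
  show "0 \<le> rt j i" if "j \<in> {0..J}" "i \<in> {0..J}" "i \<noteq> j" for j i
    using rt_bounds that by blast
qed

lemma xi_pos: "0 < xi J \<eta> \<mu> n"
  unfolding xi_def using marg_pos by (intro prod_pos) auto

lemma xi_DB: "xi J \<eta> \<mu> x * Q x y = xi J \<eta> \<mu> y * Q y x"
  unfolding xi_pw by (rule DB)

lemma xi_sum: "(xi J \<eta> \<mu> has_sum 1) S"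
  using xi_stationary by (simp add: stationary_dist_def prob_dist_def)

lemma xi_le1: "finite F \<Longrightarrow> F \<subseteq> S \<Longrightarrow> sum (xi J \<eta> \<mu>) F \<le> 1"
  using has_sum_nonneg_le[OF xi_sum] xi_pos less_imp_le by blast

definition K :: "state \<Rightarrow> real" where
  "K x = real J * (\<beta> * \<Lambda>) + real (J + 1) * (\<Sum>j\<in>{1..J}. if 0 < x j then \<gamma> j * \<mu> j (x j) else 0)"

lemma Q_le: "Q x y \<le> K x"
proof -
  have bl: "0 \<le> \<beta> * \<Lambda>" using beta_pos lam_pos by simp
  have A: "(\<Sum>i\<in>{1..J}. if y = nup i x then \<beta> * \<Lambda> * rt 0 i else 0) \<le> (\<Sum>i\<in>{1..J}. \<beta> * \<Lambda>)"
  proof (rule sum_mono)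
    fix i assume i: "i \<in> {1..J}"
    have "rt 0 i \<le> 1" using rt_bounds[of i 0] i by auto
    then have "\<beta> * \<Lambda> * rt 0 i \<le> \<beta> * \<Lambda>" using bl by (simp add: mult_left_le)
    then show "(if y = nup i x then \<beta> * \<Lambda> * rt 0 i else 0) \<le> \<beta> * \<Lambda>" using bl by simp
  qed
  have D: "(\<Sum>j\<in>{1..J}. if 0 < x j then
        (\<Sum>i\<in>{1..J} - {j}. if y = nmv j i x then \<gamma> j * \<mu> j (x j) * rt j i else 0)
        + (if y = ndn j x then \<gamma> j * \<mu> j (x j) * rt j 0 else 0) else 0)
      \<le> (\<Sum>j\<in>{1..J}. real (J + 1) * (if 0 < x j then \<gamma> j * \<mu> j (x j) else 0))"
  proof (rule sum_mono)
    fix j assume j: "j \<in> {1..J}"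
    show "(if 0 < x j then
        (\<Sum>i\<in>{1..J} - {j}. if y = nmv j i x then \<gamma> j * \<mu> j (x j) * rt j i else 0)
        + (if y = ndn j x then \<gamma> j * \<mu> j (x j) * rt j 0 else 0) else 0)
      \<le> real (J + 1) * (if 0 < x j then \<gamma> j * \<mu> j (x j) else 0)"
    proof (cases "0 < x j")
      case True
      let ?v = "\<gamma> j * \<mu> j (x j)"
      have v: "0 \<le> ?v" using gamma_nonneg mu_pos'[OF j True] j by (simp add: less_imp_le)
      have "(\<Sum>i\<in>{1..J} - {j}. if y = nmv j i x then ?v * rt j i else 0) \<le> (\<Sum>i\<in>{1..J} - {j}. ?v)"
      proof (rule sum_mono)
        fix i assume i: "i \<in> {1..J} - {j}"
        have "rt j i \<le> 1" using rt_bounds[of i j] i j by auto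
        then have "?v * rt j i \<le> ?v" using v by (simp add: mult_left_le)
        then show "(if y = nmv j i x then ?v * rt j i else 0) \<le> ?v" using v by simp
      qed
      also have "\<dots> = real (card ({1..J} - {j})) * ?v" by simp
      also have "\<dots> \<le> real J * ?v"
      proof -
        have "card ({1..J} - {j}) \<le> J" using card_Diff1_le[of "{1..J}" j] by simp
        then show ?thesis using v by (simp add: mult_right_mono)
      qed
      finally have 1: "(\<Sum>i\<in>{1..J} - {j}. if y = nmv j i x then ?v * rt j i else 0) \<le> real J * ?v" .
      have "rt j 0 \<le> 1" using rt_bounds[of 0 j] j by auto
      then have 2: "(if y = ndn j x then ?v * rt j 0 else 0) \<le> ?v" using v by (simp add: mult_left_le)
      show ?thesis using True 1 2 by (simp add: algebra_simps)
    qed simp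
  qed
  have "Q x y \<le> (\<Sum>i\<in>{1..J}. \<beta> * \<Lambda>) + (\<Sum>j\<in>{1..J}. real (J + 1) * (if 0 < x j then \<gamma> j * \<mu> j (x j) else 0))"
    unfolding Q_def' jq_unfold using A D by (rule add_mono)
  also have "\<dots> = K x" by (simp add: K_def sum_distrib_left)
  finally show ?thesis .
qed

definition M :: real where "M = real (J + J * J + J)"

lemma card_supp: "card {y. Q x y \<noteq> 0} \<le> J + J * J + J"
proof -
  let ?U1 = "(\<lambda>i. nup i x) ` {1..J}" and ?U2 = "(\<lambda>(j, i). nmv j i x) ` ({1..J} \<times> {1..J})"
    and ?U3 = "(\<lambda>j. ndn j x) ` {1..J}"
  have sub: "{y. Q x y \<noteq> 0} \<subseteq> ?U1 \<union> ?U2 \<union> ?U3" unfolding Q_def' by (rule jq_supp)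
  have "card {y. Q x y \<noteq> 0} \<le> card (?U1 \<union> ?U2 \<union> ?U3)" by (rule card_mono[OF _ sub]) auto
  also have "\<dots> \<le> card ?U1 + card ?U2 + card ?U3"
  proof -
    have "card (?U1 \<union> ?U2 \<union> ?U3) \<le> card (?U1 \<union> ?U2) + card ?U3" by (rule card_Un_le)
    moreover have "card (?U1 \<union> ?U2) \<le> card ?U1 + card ?U2" by (rule card_Un_le)
    ultimately show ?thesis by linarith
  qed
  also have "\<dots> \<le> J + J * J + J"
  proof -
    have "card ?U1 \<le> J" using card_image_le[of "{1..J}"] by simp
    moreover have "card ?U2 \<le> J * J" using card_image_le[of "{1..J} \<times> {1..J}"] by (simp add: card_cartesian_product)
    moreover have "card ?U3 \<le> J" using card_image_le[of "{1..J}"] by simp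
    ultimately show ?thesis by simp
  qed
  finally show ?thesis .
qed

lemma gm_nn: "j \<in> {1..J} \<Longrightarrow> 0 < k \<Longrightarrow> 0 \<le> \<gamma> j * \<mu> j k"
  using gamma_nonneg mu_pos' by (simp add: less_imp_le)

lemma K_nn: "0 \<le> K x"
  unfolding K_def using beta_pos lam_pos
  by (intro add_nonneg_nonneg mult_nonneg_nonneg sum_nonneg) (auto intro: gm_nn)

lemma qout_le: "qout S Q x \<le> M * K x"
proof -
  let ?T = "{y \<in> S - {x}. Q x y \<noteq> 0}"
  have "qout S Q x = sum (Q x) ?T" by (rule qout_finsupp[where q=Q and x=x, OF Q_fin])
  also have "\<dots> \<le> sum (\<lambda>_. K x) ?T" by (rule sum_mono) (rule Q_le)
  also have "\<dots> = real (card ?T) * K x" by simp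
  also have "\<dots> \<le> M * K x"
  proof -
    have "card ?T \<le> card {y. Q x y \<noteq> 0}" by (rule card_mono[OF Q_fin]) auto
    then have "card ?T \<le> J + J * J + J" using card_supp[of x] by linarith
    then have "real (card ?T) \<le> M" unfolding M_def by linarith
    then show ?thesis using K_nn by (simp add: mult_right_mono)
  qed
  finally show ?thesis .
qed

lemma xi_up: assumes "B = {}" "j \<in> {1..J}"
  shows "xi J \<eta> \<mu> (nup j n) = xi J \<eta> \<mu> n * (\<eta> j / \<mu> j (Suc (n j)))"
proof -
  have "j \<in> W" using assms WB_un by blast
  then show ?thesis unfolding xi_pw by (rule pw_up)
qed

lemma mu_bound: assumes B0: "B = {}" and j: "j \<in> {1..J}" and F: "finite F" "F \<subseteq> S"
  shows "(\<Sum>x\<in>F. xi J \<eta> \<mu> x * (if 0 < x j then \<mu> j (x j) else 0)) \<le> \<eta> j"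
proof -
  let ?F' = "{x \<in> F. 0 < x j}"
  let ?xi = "xi J \<eta> \<mu>"
  have "(\<Sum>x\<in>F. ?xi x * (if 0 < x j then \<mu> j (x j) else 0)) = (\<Sum>x\<in>F. if 0 < x j then ?xi x * \<mu> j (x j) else 0)"
    by (intro sum.cong) auto
  also have "\<dots> = (\<Sum>x\<in>?F'. ?xi x * \<mu> j (x j))"
    using F by (simp add: sum.inter_filter)
  also have "\<dots> = (\<Sum>x\<in>?F'. ?xi (ndn j x) * \<eta> j)"
  proof (rule sum.cong[OF refl])
    fix x assume x: "x \<in> ?F'"
    then have xj: "0 < x j" by simp
    have e: "nup j (ndn j x) = x" using dn_up[of x j, OF xj] .
    have s: "Suc (ndn j x j) = x j" using xj by (simp add: ndn_def)
    have "?xi x = ?xi (ndn j x) * (\<eta> j / \<mu> j (x j))"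
      using xi_up[OF B0 j, of "ndn j x"] e s by simp
    moreover have "\<mu> j (x j) \<noteq> 0" using mu_pos'[OF j xj] by simp
    ultimately show "?xi x * \<mu> j (x j) = ?xi (ndn j x) * \<eta> j" by simp
  qed
  also have "\<dots> = \<eta> j * sum ?xi (ndn j ` ?F')"
  proof -
    have inj: "inj_on (ndn j) ?F'"
    proof (rule inj_onI)
      fix x y assume x: "x \<in> ?F'" and y: "y \<in> ?F'" and e: "ndn j x = ndn j y"
      have "x = nup j (ndn j x)" using dn_up[of x j] x by simp
      also have "\<dots> = nup j (ndn j y)" using e by simp
      also have "\<dots> = y" using dn_up[of y j] y by simp
      finally show "x = y" .
    qed
    have "sum ?xi (ndn j ` ?F') = (\<Sum>x\<in>?F'. ?xi (ndn j x))"
      using sum.reindex[OF inj, of ?xi] by (simp add: comp_def)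
    then have "(\<Sum>x\<in>?F'. ?xi (ndn j x) * \<eta> j) = sum ?xi (ndn j ` ?F') * \<eta> j"
      by (simp add: sum_distrib_right)
    then show ?thesis by (simp add: mult.commute)
  qed
  also have "\<dots> \<le> \<eta> j * 1"
  proof (rule mult_left_mono)
    show "sum ?xi (ndn j ` ?F') \<le> 1" using F by (intro xi_le1) (auto intro: dn_S)
    show "0 \<le> \<eta> j" using eta_pos[of j] j by simp
  qed
  finally show ?thesis by simp
qed

lemma sum_nu: assumes B0: "B = {}"
  shows "(\<lambda>x. xi J \<eta> \<mu> x * qout S Q x) summable_on S"
proof (rule nonneg_bdd_above_summable_on)
  let ?xi = "xi J \<eta> \<mu>"
  have qo_nn: "0 \<le> qout S Q x" for x
    using qout_finsupp[where q=Q and x=x and SS=S, OF Q_fin] Q_nn by (simp add: sum_nonneg)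
  show "0 \<le> ?xi x * qout S Q x" if "x \<in> S" for x using xi_pos qo_nn by (simp add: less_imp_le)
  let ?C = "M * (real J * (\<beta> * \<Lambda>) + real (J + 1) * (\<Sum>j\<in>{1..J}. \<gamma> j * \<eta> j))"
  show "bdd_above (sum (\<lambda>x. ?xi x * qout S Q x) ` {F. F \<subseteq> S \<and> finite F})"
  proof (rule bdd_aboveI)
    fix v assume "v \<in> sum (\<lambda>x. ?xi x * qout S Q x) ` {F. F \<subseteq> S \<and> finite F}"
    then obtain F where F: "F \<subseteq> S" "finite F" "v = sum (\<lambda>x. ?xi x * qout S Q x) F" by blast
    have M0: "0 \<le> M" by (simp add: M_def)
    have "sum (\<lambda>x. ?xi x * qout S Q x) F \<le> sum (\<lambda>x. ?xi x * (M * K x)) F"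
      using qout_le xi_pos by (intro sum_mono mult_left_mono) (auto intro: less_imp_le)
    also have "\<dots> = M * (real J * (\<beta> * \<Lambda>) * sum ?xi F
        + real (J + 1) * (\<Sum>j\<in>{1..J}. \<gamma> j * (\<Sum>x\<in>F. ?xi x * (if 0 < x j then \<mu> j (x j) else 0))))"
    proof -
      have "(\<Sum>x\<in>F. ?xi x * (\<Sum>j\<in>{1..J}. if 0 < x j then \<gamma> j * \<mu> j (x j) else 0))
          = (\<Sum>j\<in>{1..J}. \<gamma> j * (\<Sum>x\<in>F. ?xi x * (if 0 < x j then \<mu> j (x j) else 0)))"
      proof -
        have "(\<Sum>x\<in>F. ?xi x * (\<Sum>j\<in>{1..J}. if 0 < x j then \<gamma> j * \<mu> j (x j) else 0))
            = (\<Sum>x\<in>F. \<Sum>j\<in>{1..J}. ?xi x * (if 0 < x j then \<gamma> j * \<mu> j (x j) else 0))"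
          by (simp add: sum_distrib_left)
        also have "\<dots> = (\<Sum>j\<in>{1..J}. \<Sum>x\<in>F. ?xi x * (if 0 < x j then \<gamma> j * \<mu> j (x j) else 0))"
          by (rule sum.swap)
        also have "\<dots> = (\<Sum>j\<in>{1..J}. \<Sum>x\<in>F. \<gamma> j * (?xi x * (if 0 < x j then \<mu> j (x j) else 0)))"
          by (intro sum.cong refl) auto
        also have "\<dots> = (\<Sum>j\<in>{1..J}. \<gamma> j * (\<Sum>x\<in>F. ?xi x * (if 0 < x j then \<mu> j (x j) else 0)))"
          by (simp add: sum_distrib_left)
        finally show ?thesis .
      qed
      note e = this
      let ?y = "\<lambda>x. ?xi x * (\<Sum>j\<in>{1..J}. if 0 < x j then \<gamma> j * \<mu> j (x j) else 0)"
      have "(\<Sum>x\<in>F. ?xi x * (M * K x)) = (\<Sum>x\<in>F. M * ((real J * (\<beta> * \<Lambda>)) * ?xi x + real (J + 1) * ?y x))"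
        by (intro sum.cong refl) (simp add: K_def algebra_simps)
      also have "\<dots> = M * ((real J * (\<beta> * \<Lambda>)) * sum ?xi F + real (J + 1) * sum ?y F)"
        by (simp add: sum.distrib flip: sum_distrib_left)
      finally show ?thesis using e by simp
    qed
    also have "\<dots> \<le> ?C"
    proof (rule mult_left_mono[OF _ M0], rule add_mono)
      show "real J * (\<beta> * \<Lambda>) * sum ?xi F \<le> real J * (\<beta> * \<Lambda>)"
        using xi_le1[OF F(2,1)] beta_pos lam_pos by (simp add: mult_left_le)
      show "real (J + 1) * (\<Sum>j\<in>{1..J}. \<gamma> j * (\<Sum>x\<in>F. ?xi x * (if 0 < x j then \<mu> j (x j) else 0)))
          \<le> real (J + 1) * (\<Sum>j\<in>{1..J}. \<gamma> j * \<eta> j)"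
      proof (rule mult_left_mono, rule sum_mono)
        fix j assume j: "j \<in> {1..J}"
        show "\<gamma> j * (\<Sum>x\<in>F. ?xi x * (if 0 < x j then \<mu> j (x j) else 0)) \<le> \<gamma> j * \<eta> j"
          using mu_bound[OF B0 j F(2,1)] gamma_nonneg j by (simp add: mult_left_mono)
      qed simp
    qed
    finally show "v \<le> ?C" using F by simp
  qed
qed

lemma gam_pos: "B = {} \<Longrightarrow> j \<in> {1..J} \<Longrightarrow> 0 < \<gamma> j"
  using gamma_nonneg inB by fastforce

lemma qpos: assumes B0: "B = {}" and x: "x \<in> S" shows "0 < qout S Q x"
proof -
  have "(\<Sum>j\<in>{0..J}. r 0 j) = r 0 0 + (\<Sum>j\<in>{1..J}. r 0 j)"
    by (simp add: sum.atLeast_Suc_atMost)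
  then have s1: "(\<Sum>j\<in>{1..J}. r 0 j) = 1" using r_stoch r_00 by simp
  obtain i where i: "i \<in> {1..J}" "0 < r 0 i"
  proof (rule ccontr)
    assume "\<not> thesis"
    then have "\<forall>i\<in>{1..J}. r 0 i \<le> 0" using that by force
    then have "(\<Sum>j\<in>{1..J}. r 0 j) \<le> 0" by (intro sum_nonpos) auto
    then show False using s1 by simp
  qed
  have qv: "Q x (nup i x) = \<Lambda> * r 0 i * \<gamma> i" by (rule Q_up[OF i(1)])
  have qp: "0 < Q x (nup i x)" unfolding qv using lam_pos i gam_pos[OF B0 i(1)] by simp
  have ne: "nup i x \<noteq> x"
  proof
    assume "nup i x = x" then have "nup i x i = x i" by simp
    then show False by (simp add: nup_def)
  qed
  let ?T = "{y \<in> S - {x}. Q x y \<noteq> 0}"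
  have mem: "nup i x \<in> ?T" using up_S[OF i(1) x] ne qp by simp
  have fT: "finite ?T" using Q_fin[of x] by (rule rev_finite_subset) auto
  have "Q x (nup i x) \<le> sum (Q x) ?T" using mem fT Q_nn by (intro member_le_sum) auto
  then show ?thesis using qp qout_finsupp[where q=Q and x=x and SS=S, OF Q_fin] by simp
qed

abbreviation "TR \<equiv> trans_rel S Q"
abbreviation "G \<equiv> {(a, b). a \<in> {0..J} \<and> b \<in> {0..J} \<and> 0 < r a b}"

lemma TR_sym: "sym TR"
proof (rule symI)
  fix x y assume "(x, y) \<in> TR"
  then have xy: "x \<in> S" "y \<in> S" "x \<noteq> y" "0 < Q x y" by (auto simp: trans_rel_def)
  have "xi J \<eta> \<mu> x * Q x y = xi J \<eta> \<mu> y * Q y x" by (rule xi_DB)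
  moreover have "0 < xi J \<eta> \<mu> x * Q x y" using xi_pos xy by simp
  ultimately have "0 < xi J \<eta> \<mu> y * Q y x" by simp
  then have "0 < Q y x" using xi_pos[of y] by (simp add: zero_less_mult_iff)
  then show "(y, x) \<in> TR" using xy by (auto simp: trans_rel_def)
qed

lemma TR_step: "x \<in> S \<Longrightarrow> y \<in> S \<Longrightarrow> x \<noteq> y \<Longrightarrow> 0 < Q x y \<Longrightarrow> (x, y) \<in> TR\<^sup>*"
  by (auto simp: trans_rel_def)

lemma x0: "x \<in> S \<Longrightarrow> ndn 0 x = x"
  by (auto simp: ndn_def states_def fun_eq_iff)

lemma Pstep:
  assumes B0: "B = {}" and G: "(a, 0) \<in> G\<^sup>*"
  shows "\<forall>x\<in>S. (a \<noteq> 0 \<longrightarrow> 0 < x a) \<longrightarrow> (x, ndn a x) \<in> TR\<^sup>*"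
  using G
proof (induction rule: converse_rtrancl_induct)
  case base
  show ?case using x0 by simp
next
  case (step a b)
  then have ab: "a \<in> {0..J}" "b \<in> {0..J}" "0 < r a b" by auto
  show ?case
  proof (intro ballI impI)
    fix x assume x: "x \<in> S" and pa: "a \<noteq> 0 \<longrightarrow> 0 < x a"
    show "(x, ndn a x) \<in> TR\<^sup>*"
    proof (cases "a = 0")
      case True then show ?thesis using x0[OF x] by simp
    next
      case a0: False
      then have aJ: "a \<in> {1..J}" and xa: "0 < x a" using ab pa by auto
      have ga: "0 < \<gamma> a" using gam_pos[OF B0 aJ] .
      have mua: "0 < \<mu> a (x a)" using mu_pos'[OF aJ xa] .
      show ?thesis
      proof (cases "b = a")
        case True then show ?thesis using step.IH x pa by simp
      next
        case ba: False
        show ?thesis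
        proof (cases "b = 0")
          case True
          have "0 < Q x (ndn a x)" using Q_dn[of a x, OF aJ xa] ga mua ab True by simp
          moreover have "ndn a x \<noteq> x"
          proof
            assume "ndn a x = x" then have "ndn a x a = x a" by simp
            then show False using xa by (simp add: ndn_def)
          qed
          ultimately show ?thesis by (intro TR_step[OF x dn_S[OF x]]) auto
        next
          case b0: False
          then have bJ: "b \<in> {1..J}" using ab by auto
          let ?x' = "nmv a b x"
          have "0 < Q x ?x'" using Q_mv[of b a x, OF bJ aJ ba xa] ga mua ab alpha_j[OF bJ] gam_pos[OF B0 bJ] beta_pos by simp
          moreover have "?x' \<noteq> x"
          proof
            assume "?x' = x" then have "?x' b = x b" by simp
            then show False by (simp add: nmv_def)
          qed
          moreover have x'S: "?x' \<in> S" using mv_S[OF bJ x] .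
          ultimately have 1: "(x, ?x') \<in> TR\<^sup>*" by (intro TR_step[OF x]) auto
          have "0 < ?x' b" by (simp add: nmv_def)
          then have 2: "(?x', ndn b ?x') \<in> TR\<^sup>*" using step.IH x'S b0 by blast
          have "ndn b ?x' = ndn a x" using ba by (auto simp: nmv_def ndn_def fun_eq_iff)
          then show ?thesis using 1 2 by simp
        qed
      qed
    qed
  qed
qed

lemma reach0: assumes B0: "B = {}" shows "x \<in> S \<Longrightarrow> (x, \<lambda>_. 0) \<in> TR\<^sup>*"
proof (induction "sum x {1..J}" arbitrary: x rule: less_induct)
  case less
  show ?case
  proof (cases "\<forall>j\<in>{1..J}. x j = 0")
    case True
    then have "x = (\<lambda>_. 0)" using less.prems by (auto simp: states_def fun_eq_iff)
    then show ?thesis by simp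
  next
    case False
    then obtain j where j: "j \<in> {1..J}" "0 < x j" by auto
    have "(j, 0) \<in> G\<^sup>*" using r_irred j by auto
    then have 1: "(x, ndn j x) \<in> TR\<^sup>*" using Pstep[OF B0] less.prems j by blast
    have "sum (ndn j x) {1..J} < sum x {1..J}"
    proof (rule sum_strict_mono_ex1)
      show "\<forall>i\<in>{1..J}. ndn j x i \<le> x i" by (simp add: ndn_def)
      show "\<exists>a\<in>{1..J}. ndn j x a < x a" using j by (auto simp: ndn_def)
    qed simp
    then have 2: "(ndn j x, \<lambda>_. 0) \<in> TR\<^sup>*" using less.hyps dn_S[OF less.prems] by blast
    show ?thesis using 1 2 by simp
  qed
qed

lemma irreducible: "B = {} \<Longrightarrow> irreducible_chain S Q"
  unfolding irreducible_chain_def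
proof (intro ballI)
  fix x y assume B0: "B = {}" and x: "x \<in> S" and y: "y \<in> S"
  have 1: "(x, \<lambda>_. 0) \<in> TR\<^sup>*" using reach0[OF B0 x] .
  have "(y, \<lambda>_. 0) \<in> TR\<^sup>*" using reach0[OF B0 y] .
  then have 2: "(\<lambda>_. 0, y) \<in> TR\<^sup>*" using sym_rtrancl[OF TR_sym] by (meson symD)
  show "(x, y) \<in> TR\<^sup>*" using 1 2 by simp
qed

lemma ergodic_Q: assumes B0: "B = {}" shows "ergodic S Q"
  unfolding ergodic_def
proof (intro conjI irreducible[OF B0] pos_recurrent_crit)
  show "0 \<le> Q x y" for x y by (rule Q_nn)
  show "finite {y\<in>S. y \<noteq> x \<and> Q x y \<noteq> 0}" for x using Q_fin[of x] by (rule rev_finite_subset) auto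
  show "0 < qout S Q x" if "x \<in> S" for x using qpos[OF B0 that] .
  show "0 < xi J \<eta> \<mu> x" for x by (rule xi_pos)
  show "xi J \<eta> \<mu> x * Q x y = xi J \<eta> \<mu> y * Q y x" for x y by (rule xi_DB)
  show "(\<lambda>x. xi J \<eta> \<mu> x * qout S Q x) summable_on S" by (rule sum_nu[OF B0])
  show "xi J \<eta> \<mu> summable_on S" using xi_sum by (auto simp: summable_on_def)
qed

end

theorem theorem3p6:
  fixes J :: nat
    and lam :: "nat \<Rightarrow> real"        \<comment> \<open>external arrival rates \<lambda>_j\<close>
    and \<mu> :: "nat \<Rightarrow> nat \<Rightarrow> real"     \<comment> \<open>service intensities \<mu>_j(k)\<close>
    and r :: "nat \<Rightarrow> nat \<Rightarrow> real"     \<comment> \<open>extended routing matrix on {0..J}\<close>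
    and \<eta> :: "nat \<Rightarrow> real"           \<comment> \<open>extended traffic solution\<close>
    and \<gamma> :: "nat \<Rightarrow> real"
  defines "\<Lambda> \<equiv> (\<Sum>j\<in>{1..J}. lam j)"
  assumes lam_nonneg: "\<forall>j\<in>{1..J}. 0 \<le> lam j"
    and lam_pos: "0 < \<Lambda>"
    and mu_pos: "\<forall>j\<in>{1..J}. \<forall>k\<ge>1. 0 < \<mu> j k"
    and r_nonneg: "\<forall>i\<in>{0..J}. \<forall>j\<in>{0..J}. 0 \<le> r i j"
    and r_stoch: "\<forall>i\<in>{0..J}. (\<Sum>j\<in>{0..J}. r i j) = 1"
    and r_irred: "\<forall>i\<in>{0..J}. \<forall>j\<in>{0..J}.
                    (i, j) \<in> {(a, b). a \<in> {0..J} \<and> b \<in> {0..J} \<and> 0 < r a b}\<^sup>*"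
    and r_0: "\<forall>j\<in>{1..J}. r 0 j = lam j / \<Lambda>"
    and r_00: "r 0 0 = 0"
    and eta_0: "\<eta> 0 = \<Lambda>"
    and eta_traffic: "\<forall>j\<in>{0..J}. \<eta> j = (\<Sum>i\<in>{0..J}. \<eta> i * r i j)"
    and reversible: "\<forall>i\<in>{0..J}. \<forall>j\<in>{0..J}. \<eta> i * r i j = \<eta> j * r j i"
    and C_finite: "\<forall>j\<in>{1..J}. summable (\<lambda>n. \<Prod>k\<in>{1..n}. \<eta> j / \<mu> j k)"
    and X_ergodic: "ergodic (states {1..J}) (jackson_q J \<Lambda> \<mu> r)"
    and gamma_nonneg: "\<forall>j\<in>{1..J}. 0 \<le> \<gamma> j"
  shows "stationary_dist (states {1..J}) (q_gamma J \<Lambda> \<mu> r \<gamma>) (xi J \<eta> \<mu>)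
       \<and> (blocked J \<gamma> = {} \<longrightarrow> ergodic (states {1..J}) (q_gamma J \<Lambda> \<mu> r \<gamma>))
       \<and> (blocked J \<gamma> \<noteq> {} \<longrightarrow>
            \<not> irreducible_chain (states {1..J}) (q_gamma J \<Lambda> \<mu> r \<gamma>)
          \<and> (\<forall>b\<in>states (blocked J \<gamma>).
               closed_subspace (states {1..J}) (q_gamma J \<Lambda> \<mu> r \<gamma>) (fiber J \<gamma> b))
          \<and> (\<Union>b\<in>states (blocked J \<gamma>). fiber J \<gamma> b) = states {1..J}
          \<and> infinite (fiber J \<gamma> ` states (blocked J \<gamma>))
          \<and> (\<forall>\<phi>. prob_dist (states (blocked J \<gamma>)) \<phi> \<longrightarrow>
               stationary_dist (states {1..J}) (q_gamma J \<Lambda> \<mu> r \<gamma>) (xi_phi J \<eta> \<mu> \<gamma> \<phi>)))"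
  proof -
  interpret net J \<Lambda> \<mu> r \<eta> \<gamma>
    using lam_pos mu_pos r_nonneg r_stoch r_irred r_00 eta_0 reversible C_finite gamma_nonneg
    by unfold_locales
  show ?thesis
    using xi_stationary ergodic_Q not_irred fiber_closed fiber_union fiber_infinite xi_phi_stationary
    by blast
qed

end
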